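(* If a countable equivalence structure $\mathcal{A}$ has finitely many infinite equivalence classes, then $\mathcal{A}$ is relatively $\Delta^0_2$ bi-embeddably categorical.
   Context: An equivalence structure $\mathcal{A}=(A,E)$ has universe $A\subseteq\omega$ and an equivalence relation $E$ on $A$; structures are identified with their atomic diagrams. Two structures are bi-embeddable if each embeds into the other; such a structure is a bi-embeddable copy. A countable structure $\mathcal{A}$ is relatively $\Delta^0_2$ bi-embeddably categorical if for every bi-embeddable copy $\mathcal{B}$ of $\mathcal{A}$ there are embeddings $\mathcal{A}\hookrightarrow\mathcal{B}$ and $\mathcal{B}\hookrightarrow\mathcal{A}$ that are $\Delta^0_2$ relative to $\mathcal{A}\oplus\mathcal{B}$ (i.e., computable in $(\mathcal{A}\oplus\mathcal{B})'$). *)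

theory Defs
  imports Main "HOL-Library.Nat_Bijection"
begin

definition eq_structure :: "nat set \<Rightarrow> (nat \<times> nat) set \<Rightarrow> bool" where
  "eq_structure A E \<longleftrightarrow> equiv A E"

definition is_embedding ::
  "nat set \<Rightarrow> (nat \<times> nat) set \<Rightarrow> nat set \<Rightarrow> (nat \<times> nat) set \<Rightarrow> (nat \<Rightarrow> nat) \<Rightarrow> bool" where
  "is_embedding A E B F f \<longleftrightarrow>
     inj_on f A \<and> f ` A \<subseteq> B \<and>
     (\<forall>x\<in>A. \<forall>y\<in>A. (x, y) \<in> E \<longleftrightarrow> (f x, f y) \<in> F)"

definition embeds :: "nat set \<Rightarrow> (nat \<times> nat) set \<Rightarrow> nat set \<Rightarrow> (nat \<times> nat) set \<Rightarrow> bool" where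
  "embeds A E B F \<longleftrightarrow> (\<exists>f. is_embedding A E B F f)"

definition bi_embeddable :: "nat set \<Rightarrow> (nat \<times> nat) set \<Rightarrow> nat set \<Rightarrow> (nat \<times> nat) set \<Rightarrow> bool" where
  "bi_embeddable A E B F \<longleftrightarrow> embeds A E B F \<and> embeds B F A E"

text \<open>Atomic diagram of (A,E) as a 0/1-valued function: at 2m it tells whether m \<in> A,
at 2m+1 whether the pair with Cantor code m lies in E (equality is trivial on nat).\<close>

definition diag :: "nat set \<Rightarrow> (nat \<times> nat) set \<Rightarrow> nat \<Rightarrow> nat" where
  "diag A E n = (if even n then (if n div 2 \<in> A then 1 else 0)
                 else (if prod_decode (n div 2) \<in> E then 1 else 0))"

definition join :: "(nat \<Rightarrow> nat) \<Rightarrow> (nat \<Rightarrow> nat) \<Rightarrow> nat \<Rightarrow> nat" where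
  "join X Y n = (if even n then X (n div 2) else Y (n div 2))"

text \<open>Programs for partial recursive functions. O queries the oracle X; H q queries the
second-level oracle J (used for the halting problem of level-one programs).\<close>

datatype prog = Zer | Suc_p | Proj nat | Orc | Comp prog "prog list"
  | PrimRec prog prog | Mu prog | Hlt prog

inductive ev :: "(nat \<Rightarrow> nat) \<Rightarrow> (prog \<Rightarrow> nat \<Rightarrow> nat) \<Rightarrow> prog \<Rightarrow> nat list \<Rightarrow> nat \<Rightarrow> bool"
  for X :: "nat \<Rightarrow> nat" and J :: "prog \<Rightarrow> nat \<Rightarrow> nat" where
  ev_zero: "ev X J Zer xs 0"
| ev_suc: "ev X J Suc_p (x # xs) (Suc x)"
| ev_proj: "i < length xs \<Longrightarrow> ev X J (Proj i) xs (xs ! i)"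
| ev_orc: "ev X J Orc (x # xs) (X x)"
| ev_hlt: "ev X J (Hlt q) (x # xs) (J q x)"
| ev_comp: "list_all2 (\<lambda>g y. ev X J g xs y) gs ys \<Longrightarrow> ev X J f ys v \<Longrightarrow> ev X J (Comp f gs) xs v"
| ev_pr0: "ev X J g xs v \<Longrightarrow> ev X J (PrimRec g h) (0 # xs) v"
| ev_prS: "ev X J (PrimRec g h) (n # xs) u \<Longrightarrow> ev X J h (n # u # xs) v
            \<Longrightarrow> ev X J (PrimRec g h) (Suc n # xs) v"
| ev_mu: "ev X J f (n # xs) 0 \<Longrightarrow> (\<forall>m<n. \<exists>y. y > 0 \<and> ev X J f (m # xs) y)
            \<Longrightarrow> ev X J (Mu f) xs n"

text \<open>Level one: X-computation (the Hlt instruction is trivialised to the constant 0,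
so these are exactly the X-partial-recursive functions).\<close>

definition halts1 :: "(nat \<Rightarrow> nat) \<Rightarrow> prog \<Rightarrow> nat \<Rightarrow> bool" where
  "halts1 X q x \<longleftrightarrow> (\<exists>v. ev X (\<lambda>_ _. 0) q [x] v)"

text \<open>The halting oracle for X-computations: this is Turing equivalent to the jump X'.\<close>

definition jump_oracle :: "(nat \<Rightarrow> nat) \<Rightarrow> prog \<Rightarrow> nat \<Rightarrow> nat" where
  "jump_oracle X q x = (if halts1 X q x then 1 else 0)"

definition delta2_on :: "(nat \<Rightarrow> nat) \<Rightarrow> nat set \<Rightarrow> (nat \<Rightarrow> nat) \<Rightarrow> bool" where
  "delta2_on X D f \<longleftrightarrow> (\<exists>p. \<forall>x\<in>D. ev X (jump_oracle X) p [x] (f x))"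

definition rel_delta2_bi_emb_categorical :: "nat set \<Rightarrow> (nat \<times> nat) set \<Rightarrow> bool" where
  "rel_delta2_bi_emb_categorical A E \<longleftrightarrow>
     (\<forall>B F. eq_structure B F \<longrightarrow> bi_embeddable A E B F \<longrightarrow>
        (\<exists>f g. is_embedding A E B F f \<and> is_embedding B F A E g \<and>
               delta2_on (join (diag A E) (diag B F)) A f \<and>
               delta2_on (join (diag A E) (diag B F)) B g))"

end

theory Submission
  imports Defs
begin


definition compP :: "(nat \<Rightarrow> nat) \<Rightarrow> (prog \<Rightarrow> nat \<Rightarrow> nat) \<Rightarrow> nat \<Rightarrow> (nat list \<Rightarrow> bool) \<Rightarrow> (nat list \<Rightarrow> nat) \<Rightarrow> bool" where
  "compP X J n P f \<longleftrightarrow> (\<exists>p. \<forall>xs. length xs = n \<longrightarrow> P xs \<longrightarrow> ev X J p xs (f xs))"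

abbreviation cmp :: "(nat \<Rightarrow> nat) \<Rightarrow> (prog \<Rightarrow> nat \<Rightarrow> nat) \<Rightarrow> nat \<Rightarrow> (nat list \<Rightarrow> nat) \<Rightarrow> bool" where
  "cmp X J n f \<equiv> compP X J n (\<lambda>_. True) f"

lemma ev_det: "ev X J p xs v \<Longrightarrow> ev X J p xs w \<Longrightarrow> v = w"
proof (induction arbitrary: w rule: ev.induct)
  case ev_zero show ?case using ev_zero.prems by (cases rule: ev.cases) auto
next
  case (ev_suc x xs) show ?case using ev_suc.prems by (cases rule: ev.cases) auto
next
  case (ev_proj i xs) show ?case using ev_proj.prems by (cases rule: ev.cases) auto
next
  case (ev_orc x xs) show ?case using ev_orc.prems by (cases rule: ev.cases) auto
next
  case (ev_hlt q x xs) show ?case using ev_hlt.prems by (cases rule: ev.cases) auto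
next
  case (ev_comp xs gs ys f v)
  from ev_comp.prems obtain ys' where a: "list_all2 (\<lambda>g y. ev X J g xs y) gs ys'" and b: "ev X J f ys' w"
    by (cases rule: ev.cases) auto
  have l: "list_all2 (\<lambda>g y. \<forall>w. ev X J g xs w \<longrightarrow> y = w) gs ys"
    using ev_comp.IH(1) by (rule list_all2_mono) auto
  have "ys' = ys" using l a
  proof (induction gs arbitrary: ys ys')
    case Nil then show ?case by auto
  next
    case (Cons g gs)
    then show ?case by (auto simp: list_all2_Cons1)
  qed
  then show ?case using ev_comp.IH b by auto
next
  case (ev_pr0 g xs v h) show ?case using ev_pr0.prems ev_pr0.IH by (cases rule: ev.cases) auto
next
  case (ev_prS g h n xs u v)
  note IH1 = ev_prS.IH(1) and IH2 = ev_prS.IH(2)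
  show ?case using ev_prS.prems proof (cases rule: ev.cases)
    case (ev_prS u2)
    then have "u2 = u" using IH1 by blast
    then show ?thesis using IH2 ev_prS by blast
  qed
next
  case (ev_mu f n xs)
  have I1: "\<And>w. ev X J f (n # xs) w \<Longrightarrow> 0 = w" by (rule ev_mu.IH(1))
  have I2: "\<forall>m<n. \<exists>y>0. ev X J f (m # xs) y \<and> (\<forall>x. ev X J f (m # xs) x \<longrightarrow> y = x)" by (rule ev_mu.IH(2))
  from ev_mu.prems obtain n' where a: "ev X J f (n' # xs) 0" and b: "\<forall>m<n'. \<exists>y. y > 0 \<and> ev X J f (m # xs) y"
    and w: "w = n'" by (cases rule: ev.cases) auto
  show ?case
  proof (rule ccontr)
    assume "n \<noteq> w"
    then consider "n < n'" | "n' < n" using w by linarith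
    then show False
    proof cases
      case 1 then obtain y where "y > 0" "ev X J f (n # xs) y" using b by blast
      then show False using I1 by fastforce
    next
      case 2 then obtain y where "y > 0" "\<And>x. ev X J f (n' # xs) x \<Longrightarrow> y = x"
        using I2 by blast
      then show False using a by fastforce
    qed
  qed
qed


lemma compP_cong: "compP X J n P f \<Longrightarrow> (\<And>xs. length xs = n \<Longrightarrow> P xs \<Longrightarrow> f xs = g xs) \<Longrightarrow> compP X J n P g"
  unfolding compP_def by metis

lemma comp_cong:
  assumes "cmp X J n f" "\<And>xs. length xs = n \<Longrightarrow> f xs = g xs" shows "cmp X J n g"
  by (rule compP_cong[OF assms(1)]) (simp add: assms(2))

lemma comp_weaken: "cmp X J n f \<Longrightarrow> compP X J n P f"
  unfolding compP_def by blast

lemma comp_zero: "cmp X J n (\<lambda>_. 0)"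
  unfolding compP_def by (auto intro: ev_zero)

lemma comp_suc: "cmp X J 1 (\<lambda>xs. Suc (xs ! 0))"
  unfolding compP_def
  apply (rule exI[of _ Suc_p])
  apply (auto simp: length_Suc_conv intro: ev_suc)
  done

lemma comp_proj: "i < n \<Longrightarrow> cmp X J n (\<lambda>xs. xs ! i)"
  unfolding compP_def by (auto intro: ev_proj)

lemma comp_orc: "cmp X J 1 (\<lambda>xs. X (xs ! 0))"
  unfolding compP_def
  apply (rule exI[of _ Orc])
  apply (auto simp: length_Suc_conv intro: ev_orc)
  done

lemma comp_hlt: "cmp X J 1 (\<lambda>xs. J q (xs ! 0))"
  unfolding compP_def
  apply (rule exI[of _ "Hlt q"])
  apply (auto simp: length_Suc_conv intro: ev_hlt)
  done

lemma progs_exist: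
  assumes "\<forall>f\<in>set fs. compP X J n P f"
  shows "\<exists>ps. list_all2 (\<lambda>p f. \<forall>xs. length xs = n \<longrightarrow> P xs \<longrightarrow> ev X J p xs (f xs)) ps fs"
  using assms
proof (induction fs)
  case Nil then show ?case by auto
next
  case (Cons f fs)
  then obtain ps where "list_all2 (\<lambda>p f. \<forall>xs. length xs = n \<longrightarrow> P xs \<longrightarrow> ev X J p xs (f xs)) ps fs" by auto
  moreover obtain p where "\<forall>xs. length xs = n \<longrightarrow> P xs \<longrightarrow> ev X J p xs (f xs)" using Cons.prems unfolding compP_def by auto
  ultimately show ?case by (intro exI[of _ "p # ps"]) auto
qed

lemma list_all2_ev_map:
  "list_all2 (\<lambda>p f. \<forall>xs. length xs = n \<longrightarrow> P xs \<longrightarrow> ev X J p xs (f xs)) ps fs \<Longrightarrow> length xs = n \<Longrightarrow> P xs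
   \<Longrightarrow> list_all2 (\<lambda>g y. ev X J g xs y) ps (map (\<lambda>f. f xs) fs)"
  by (induction ps fs rule: list_all2_induct) auto

lemma compP_compose:
  assumes "compP X J m Q h" "length fs = m" "\<forall>f\<in>set fs. compP X J n P f"
    and "\<And>xs. length xs = n \<Longrightarrow> P xs \<Longrightarrow> Q (map (\<lambda>f. f xs) fs)"
  shows "compP X J n P (\<lambda>xs. h (map (\<lambda>f. f xs) fs))"
proof -
  obtain ps where ps: "list_all2 (\<lambda>p f. \<forall>xs. length xs = n \<longrightarrow> P xs \<longrightarrow> ev X J p xs (f xs)) ps fs"
    using progs_exist[OF assms(3)] by auto
  obtain ph where ph: "\<forall>ys. length ys = m \<longrightarrow> Q ys \<longrightarrow> ev X J ph ys (h ys)" using assms(1) unfolding compP_def by auto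
  show ?thesis unfolding compP_def
  proof (intro exI[of _ "Comp ph ps"] allI impI)
    fix xs :: "nat list" assume l: "length xs = n" and p: "P xs"
    show "ev X J (Comp ph ps) xs (h (map (\<lambda>f. f xs) fs))"
      apply (rule ev_comp[OF list_all2_ev_map[OF ps l p]])
      using ph assms(2) assms(4)[OF l p] by auto
  qed
qed

lemma comp_compose:
  assumes "cmp X J m h" "length fs = m" "\<forall>f\<in>set fs. cmp X J n f"
  shows "cmp X J n (\<lambda>xs. h (map (\<lambda>f. f xs) fs))"
  using compP_compose[OF assms] by simp

lemma comp_c1: "cmp X J 1 h \<Longrightarrow> cmp X J n f \<Longrightarrow> cmp X J n (\<lambda>xs. h [f xs])"
  using comp_compose[of X J 1 h "[f]" n] by simp

lemma comp_c2: "cmp X J 2 h \<Longrightarrow> cmp X J n f \<Longrightarrow> cmp X J n g \<Longrightarrow> cmp X J n (\<lambda>xs. h [f xs, g xs])"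
  using comp_compose[of X J 2 h "[f, g]" n] by simp

lemma comp_c3: "cmp X J 3 h \<Longrightarrow> cmp X J n f \<Longrightarrow> cmp X J n g \<Longrightarrow> cmp X J n k \<Longrightarrow> cmp X J n (\<lambda>xs. h [f xs, g xs, k xs])"
  using comp_compose[of X J 3 h "[f, g, k]" n] by (simp add: numeral_3_eq_3)

lemma comp_rec:
  assumes "cmp X J n g" "cmp X J (Suc (Suc n)) h"
  shows "cmp X J (Suc n) (\<lambda>xs. rec_nat (g (tl xs)) (\<lambda>i u. h (i # u # tl xs)) (hd xs))"
proof -
  obtain pg where pg: "\<forall>xs. length xs = n \<longrightarrow> ev X J pg xs (g xs)" using assms(1) unfolding compP_def by auto
  obtain ph where ph: "\<forall>xs. length xs = Suc (Suc n) \<longrightarrow> ev X J ph xs (h xs)" using assms(2) unfolding compP_def by auto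
  have *: "ev X J (PrimRec pg ph) (k # ys) (rec_nat (g ys) (\<lambda>i u. h (i # u # ys)) k)" if "length ys = n" for k ys
  proof (induction k)
    case 0 then show ?case using pg that by (auto intro: ev_pr0)
  next
    case (Suc k) then show ?case using ph that by (auto intro: ev_prS)
  qed
  show ?thesis unfolding compP_def
    by (intro exI[of _ "PrimRec pg ph"]) (auto simp: length_Suc_conv *)
qed

lemma compP_mu:
  assumes "cmp X J (Suc n) g" "\<And>xs. length xs = n \<Longrightarrow> P xs \<Longrightarrow> \<exists>k. g (k # xs) = 0"
  shows "compP X J n P (\<lambda>xs. LEAST k. g (k # xs) = 0)"
proof -
  obtain pg where pg: "\<forall>xs. length xs = Suc n \<longrightarrow> ev X J pg xs (g xs)" using assms(1) unfolding compP_def by auto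
  show ?thesis unfolding compP_def
  proof (intro exI[of _ "Mu pg"] allI impI)
    fix xs :: "nat list" assume l: "length xs = n" and p: "P xs"
    obtain k where "g (k # xs) = 0" using assms(2)[OF l p] by auto
    then have a: "g ((LEAST k. g (k # xs) = 0) # xs) = 0" by (rule LeastI)
    have b: "\<forall>m<(LEAST k. g (k # xs) = 0). \<exists>y>0. ev X J pg (m # xs) y"
    proof (intro allI impI)
      fix m assume "m < (LEAST k. g (k # xs) = 0)"
      then have "g (m # xs) \<noteq> 0" by (rule not_less_Least)
      moreover have "ev X J pg (m # xs) (g (m # xs))" using pg l by simp
      ultimately show "\<exists>y>0. ev X J pg (m # xs) y" by blast
    qed
    have c: "ev X J pg ((LEAST k. g (k # xs) = 0) # xs) 0"
      using pg l a by (metis length_Cons)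
    show "ev X J (Mu pg) xs (LEAST k. g (k # xs) = 0)"
      by (rule ev_mu[OF c b])
  qed
qed

lemma comp_mu:
  assumes "cmp X J (Suc n) g" "\<And>xs. length xs = n \<Longrightarrow> \<exists>k. g (k # xs) = 0"
  shows "cmp X J n (\<lambda>xs. LEAST k. g (k # xs) = 0)"
  using compP_mu[of X J n g "\<lambda>_. True"] assms by auto

lemma comp_sigma1:
  assumes "cmp X (\<lambda>_ _. 0) 2 g"
  shows "cmp X (jump_oracle X) 1 (\<lambda>xs. if \<exists>y. g [y, xs ! 0] = 0 then 1 else 0)"
proof -
  obtain pg where pg: "\<forall>xs. length xs = 2 \<longrightarrow> ev X (\<lambda>_ _. 0) pg xs (g xs)" using assms unfolding compP_def by auto
  have h: "halts1 X (Mu pg) x \<longleftrightarrow> (\<exists>y. g [y, x] = 0)" for x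
  proof
    assume "halts1 X (Mu pg) x"
    then obtain v where "ev X (\<lambda>_ _. 0) (Mu pg) [x] v" unfolding halts1_def by auto
    then have "ev X (\<lambda>_ _. 0) pg [v, x] 0" by (cases rule: ev.cases) auto
    moreover have "ev X (\<lambda>_ _. 0) pg [v, x] (g [v, x])" using pg by auto
    ultimately show "\<exists>y. g [y, x] = 0" using ev_det by metis
  next
    assume "\<exists>y. g [y, x] = 0"
    show "halts1 X (Mu pg) x" unfolding halts1_def
    proof
      obtain k where "g [k, x] = 0" using \<open>\<exists>y. g [y, x] = 0\<close> by auto
      then have a: "g [(LEAST k. g [k, x] = 0), x] = 0" by (rule LeastI)
      have b: "\<forall>m<(LEAST k. g [k, x] = 0). \<exists>y>0. ev X (\<lambda>_ _. 0) pg (m # [x]) y"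
      proof (intro allI impI)
        fix m assume "m < (LEAST k. g [k, x] = 0)"
        then have "g [m, x] \<noteq> 0" by (rule not_less_Least)
        moreover have "ev X (\<lambda>_ _. 0) pg [m, x] (g [m, x])" using pg by simp
        ultimately show "\<exists>y>0. ev X (\<lambda>_ _. 0) pg (m # [x]) y" by blast
      qed
      have c: "ev X (\<lambda>_ _. 0) pg [(LEAST k. g [k, x] = 0), x] 0"
        using pg a by (metis length_Cons list.size(3) numeral_2_eq_2)
      show "ev X (\<lambda>_ _. 0) (Mu pg) [x] (LEAST k. g [k, x] = 0)"
        by (rule ev_mu[OF c b])
    qed
  qed
  show ?thesis unfolding compP_def
  proof (intro exI[of _ "Hlt (Mu pg)"] allI impI)
    fix xs :: "nat list" assume "length xs = 1"
    then obtain x where xs: "xs = [x]" by (auto simp: length_Suc_conv)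
    have "ev X (jump_oracle X) (Hlt (Mu pg)) [x] (jump_oracle X (Mu pg) x)" by (rule ev_hlt)
    then show "ev X (jump_oracle X) (Hlt (Mu pg)) xs (if \<exists>y. g [y, xs ! 0] = 0 then 1 else 0)"
      using xs h by (simp add: jump_oracle_def)
  qed
qed



lemma cmp_const: "cmp X J n (\<lambda>_. c)"
proof (induction c)
  case 0 then show ?case by (rule comp_zero)
next
  case (Suc c) then show ?case using comp_c1[OF comp_suc, of X J n "\<lambda>_. c"] by simp
qed

lemma cmp_p0: "cmp X J (Suc n) (\<lambda>xs. xs ! 0)" by (rule comp_proj) simp
lemma cmp_p1: "cmp X J (Suc (Suc n)) (\<lambda>xs. xs ! 1)" by (rule comp_proj) simp
lemma cmp_p2: "cmp X J (Suc (Suc (Suc n))) (\<lambda>xs. xs ! 2)" by (rule comp_proj) simp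
lemma cmp_p3: "cmp X J (Suc (Suc (Suc (Suc n)))) (\<lambda>xs. xs ! 3)" by (rule comp_proj) simp

lemma cmp_add2: "cmp X J 2 (\<lambda>xs. xs ! 0 + xs ! 1)"
proof -
  have h: "cmp X J 3 (\<lambda>xs. Suc (xs ! 1))"
    using comp_c1[OF comp_suc, of X J 3 "\<lambda>xs. xs ! 1"] comp_proj[of 1 3 X J] by simp
  have "cmp X J (Suc (Suc 0)) (\<lambda>xs. rec_nat (tl xs ! 0) (\<lambda>i u. Suc ((i # u # tl xs) ! 1)) (hd xs))"
    using comp_rec[of X J 1 "\<lambda>xs. xs ! 0" "\<lambda>xs. Suc (xs ! 1)"] comp_proj[of 0 1 X J] h
    by (simp add: numeral_3_eq_3)
  then show ?thesis unfolding numeral_2_eq_2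
    apply (rule comp_cong)
    apply (auto simp: length_Suc_conv)
    subgoal for x y by (induction x) auto
    done
qed

lemma cmp_add: "cmp X J n f \<Longrightarrow> cmp X J n g \<Longrightarrow> cmp X J n (\<lambda>xs. f xs + g xs)"
  using comp_c2[OF cmp_add2] by simp

lemma cmp_pred: "cmp X J 1 (\<lambda>xs. xs ! 0 - 1)"
proof -
  have "cmp X J (Suc 0) (\<lambda>xs. rec_nat 0 (\<lambda>i u. (i # u # tl xs) ! 0) (hd xs))"
    using comp_rec[of X J 0 "\<lambda>_. 0" "\<lambda>xs. xs ! 0"] cmp_const[of X J 0 0] cmp_p0[of X J "Suc 0"]
    by simp
  then show ?thesis unfolding One_nat_def
    apply (rule comp_cong)
    apply (auto simp: length_Suc_conv)
    subgoal for x by (induction x) auto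
    done
qed

lemma cmp_sub2: "cmp X J 2 (\<lambda>xs. xs ! 1 - xs ! 0)"
proof -
  have h: "cmp X J 3 (\<lambda>xs. xs ! 1 - 1)"
    using comp_c1[OF cmp_pred, of X J 3 "\<lambda>xs. xs ! 1"] comp_proj[of 1 3 X J] by simp
  have "cmp X J (Suc (Suc 0)) (\<lambda>xs. rec_nat (tl xs ! 0) (\<lambda>i u. (i # u # tl xs) ! 1 - 1) (hd xs))"
    using comp_rec[of X J 1 "\<lambda>xs. xs ! 0" "\<lambda>xs. xs ! 1 - 1"] comp_proj[of 0 1 X J] h
    by (simp add: numeral_3_eq_3)
  then show ?thesis unfolding numeral_2_eq_2
    apply (rule comp_cong)
    apply (auto simp: length_Suc_conv)
    subgoal for x y by (induction x) auto
    done
qed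

lemma cmp_sub: "cmp X J n f \<Longrightarrow> cmp X J n g \<Longrightarrow> cmp X J n (\<lambda>xs. f xs - g xs)"
  using comp_c2[OF cmp_sub2, of X J n g f] by simp

lemma cmp_mult2: "cmp X J 2 (\<lambda>xs. xs ! 0 * xs ! 1)"
proof -
  have h: "cmp X J 3 (\<lambda>xs. xs ! 1 + xs ! 2)"
    using cmp_add[OF comp_proj[of 1 3 X J] comp_proj[of 2 3 X J]] by simp
  have "cmp X J (Suc (Suc 0)) (\<lambda>xs. rec_nat 0 (\<lambda>i u. (i # u # tl xs) ! 1 + (i # u # tl xs) ! 2) (hd xs))"
    using comp_rec[of X J 1 "\<lambda>xs. 0" "\<lambda>xs. xs ! 1 + xs ! 2"] cmp_const[of X J 1 0] h
    by (simp add: numeral_3_eq_3)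
  then show ?thesis unfolding numeral_2_eq_2
    apply (rule comp_cong)
    apply (auto simp: length_Suc_conv)
    subgoal for x y by (induction x) auto
    done
qed

lemma cmp_mult: "cmp X J n f \<Longrightarrow> cmp X J n g \<Longrightarrow> cmp X J n (\<lambda>xs. f xs * g xs)"
  using comp_c2[OF cmp_mult2] by simp

abbreviation ind :: "bool \<Rightarrow> nat" where "ind b \<equiv> (if b then 1 else 0)"

lemma cmp_eq: "cmp X J n f \<Longrightarrow> cmp X J n g \<Longrightarrow> cmp X J n (\<lambda>xs. ind (f xs = g xs))"
proof -
  assume a: "cmp X J n f" "cmp X J n g"
  have "cmp X J n (\<lambda>xs. 1 - ((f xs - g xs) + (g xs - f xs)))"
    by (intro cmp_sub cmp_add cmp_const a)
  then show ?thesis by (rule comp_cong) auto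
qed

lemma cmp_le: "cmp X J n f \<Longrightarrow> cmp X J n g \<Longrightarrow> cmp X J n (\<lambda>xs. ind (f xs \<le> g xs))"
proof -
  assume a: "cmp X J n f" "cmp X J n g"
  have "cmp X J n (\<lambda>xs. 1 - (f xs - g xs))"
    by (intro cmp_sub cmp_add cmp_const a)
  then show ?thesis by (rule comp_cong) auto
qed

lemma cmp_nz: "cmp X J n f \<Longrightarrow> cmp X J n (\<lambda>xs. ind (f xs \<noteq> 0))"
proof -
  assume a: "cmp X J n f"
  have "cmp X J n (\<lambda>xs. 1 - (1 - f xs))"
    by (intro cmp_sub cmp_const a)
  then show ?thesis by (rule comp_cong) auto
qed

lemma cmp_and: "cmp X J n (\<lambda>xs. ind (P xs)) \<Longrightarrow> cmp X J n (\<lambda>xs. ind (Q xs)) \<Longrightarrow> cmp X J n (\<lambda>xs. ind (P xs \<and> Q xs))"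
proof -
  assume a: "cmp X J n (\<lambda>xs. ind (P xs))" "cmp X J n (\<lambda>xs. ind (Q xs))"
  have "cmp X J n (\<lambda>xs. ind (P xs) * ind (Q xs))" by (rule cmp_mult[OF a])
  then show ?thesis by (rule comp_cong) auto
qed

lemma cmp_not: "cmp X J n (\<lambda>xs. ind (P xs)) \<Longrightarrow> cmp X J n (\<lambda>xs. ind (\<not> P xs))"
proof -
  assume a: "cmp X J n (\<lambda>xs. ind (P xs))"
  have "cmp X J n (\<lambda>xs. 1 - ind (P xs))" by (rule cmp_sub[OF cmp_const a])
  then show ?thesis by (rule comp_cong) auto
qed

lemma cmp_or: "cmp X J n (\<lambda>xs. ind (P xs)) \<Longrightarrow> cmp X J n (\<lambda>xs. ind (Q xs)) \<Longrightarrow> cmp X J n (\<lambda>xs. ind (P xs \<or> Q xs))"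
proof -
  assume a: "cmp X J n (\<lambda>xs. ind (P xs))" "cmp X J n (\<lambda>xs. ind (Q xs))"
  have "cmp X J n (\<lambda>xs. ind (ind (P xs) + ind (Q xs) \<noteq> 0))" by (rule cmp_nz[OF cmp_add[OF a]])
  then show ?thesis by (rule comp_cong) auto
qed

lemma cmp_if: "cmp X J n (\<lambda>xs. ind (P xs)) \<Longrightarrow> cmp X J n f \<Longrightarrow> cmp X J n g \<Longrightarrow> cmp X J n (\<lambda>xs. if P xs then f xs else g xs)"
proof -
  assume a: "cmp X J n (\<lambda>xs. ind (P xs))" "cmp X J n f" "cmp X J n g"
  have "cmp X J n (\<lambda>xs. ind (P xs) * f xs + (1 - ind (P xs)) * g xs)"
    by (intro cmp_add cmp_mult cmp_sub cmp_const a)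
  then show ?thesis by (rule comp_cong) auto
qed

lemma map_nth_drop2: "length xs = Suc (Suc n) \<Longrightarrow> map (\<lambda>i. xs ! (i + 2)) [0..<n] = drop 2 xs"
  by (rule nth_equalityI) (auto simp: add.commute)

lemma cmp_drop1: "cmp X J (Suc n) g \<Longrightarrow> cmp X J (Suc (Suc n)) (\<lambda>xs. g (hd xs # drop 2 xs))"
proof -
  assume a: "cmp X J (Suc n) g"
  have "cmp X J (Suc (Suc n)) (\<lambda>xs. g (map (\<lambda>f. f xs) ((\<lambda>xs::nat list. xs ! 0) # map (\<lambda>i (xs::nat list). xs ! (i + 2)) [0..<n])))"
  proof (rule comp_compose[OF a])
    show "length ((\<lambda>xs::nat list. xs ! 0) # map (\<lambda>i (xs::nat list). xs ! (i + 2)) [0..<n]) = Suc n" by simp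
    show "\<forall>f\<in>set ((\<lambda>xs::nat list. xs ! 0) # map (\<lambda>i (xs::nat list). xs ! (i + 2)) [0..<n]). cmp X J (Suc (Suc n)) f"
    proof
      fix f assume "f \<in> set ((\<lambda>xs::nat list. xs ! 0) # map (\<lambda>i (xs::nat list). xs ! (i + 2)) [0..<n])"
      then consider "f = (\<lambda>xs. xs ! 0)" | i where "i < n" "f = (\<lambda>xs. xs ! (i + 2))" by auto
      then show "cmp X J (Suc (Suc n)) f"
        by cases (simp_all add: comp_proj)
    qed
  qed
  then show ?thesis
  proof (rule comp_cong)
    fix xs :: "nat list" assume l: "length xs = Suc (Suc n)"
    then have "xs ! 0 = hd xs" by (cases xs) auto
    then show "g (map (\<lambda>f. f xs) ((\<lambda>xs::nat list. xs ! 0) # map (\<lambda>i (xs::nat list). xs ! (i + 2)) [0..<n])) = g (hd xs # drop 2 xs)"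
      using map_nth_drop2[OF l] by (simp add: o_def)
  qed
qed

lemma card_less_Suc_ind: "card {i. i < Suc k \<and> P i} = card {i. i < k \<and> P i} + ind (P k)"
proof -
  have "{i. i < Suc k \<and> P i} = {i. i < k \<and> P i} \<union> (if P k then {k} else {})"
    by (auto simp: less_Suc_eq)
  then show ?thesis by (auto simp: card_insert_if)
qed

lemma rec_count: "rec_nat 0 (\<lambda>i u. u + ind (P i)) k = card {i. i < k \<and> P i}"
  by (induction k) (auto simp: card_less_Suc_ind)

lemma cmp_count:
  assumes "cmp X J (Suc n) (\<lambda>xs. ind (P xs))"
  shows "cmp X J (Suc n) (\<lambda>xs. card {i. i < hd xs \<and> P (i # tl xs)})"
proof -
  have h: "cmp X J (Suc (Suc n)) (\<lambda>xs. xs ! 1 + ind (P (hd xs # drop 2 xs)))"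
    by (intro cmp_add cmp_p1 cmp_drop1 assms)
  have "cmp X J (Suc n) (\<lambda>xs. rec_nat 0 (\<lambda>i u. (i # u # tl xs) ! 1 + ind (P (hd (i # u # tl xs) # drop 2 (i # u # tl xs)))) (hd xs))"
    using comp_rec[OF cmp_const h] by simp
  then show ?thesis
  proof (rule comp_cong)
    fix xs :: "nat list"
    show "rec_nat 0 (\<lambda>i u. (i # u # tl xs) ! 1 + ind (P (hd (i # u # tl xs) # drop 2 (i # u # tl xs)))) (hd xs)
       = card {i. i < hd xs \<and> P (i # tl xs)}"
      using rec_count[of "\<lambda>i. P (i # tl xs)" "hd xs"] by simp
  qed
qed

lemma cmp_bex:
  assumes "cmp X J (Suc n) (\<lambda>xs. ind (P xs))"
  shows "cmp X J (Suc n) (\<lambda>xs. ind (\<exists>i < hd xs. P (i # tl xs)))"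
proof -
  have e: "card {i::nat. i < k \<and> Q i} \<noteq> 0 \<longleftrightarrow> (\<exists>i<k. Q i)" for k Q
  proof -
    have "finite {i::nat. i < k \<and> Q i}" by simp
    then show ?thesis by (auto simp: card_eq_0_iff)
  qed
  show ?thesis using cmp_nz[OF cmp_count[OF assms]]
    by (rule comp_cong) (simp only: e)
qed



lemma comp_c4: "cmp X J 4 h \<Longrightarrow> cmp X J n f \<Longrightarrow> cmp X J n g \<Longrightarrow> cmp X J n k \<Longrightarrow> cmp X J n l
  \<Longrightarrow> cmp X J n (\<lambda>xs. h [f xs, g xs, k xs, l xs])"
  using comp_compose[of X J 4 h "[f, g, k, l]" n] by (simp add: numeral_eq_Suc)

lemma cmp_Suc: "cmp X J n f \<Longrightarrow> cmp X J n (\<lambda>xs. Suc (f xs))"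
  using comp_c1[OF comp_suc] by simp

lemma cmp_tri1: "cmp X J 1 (\<lambda>xs. triangle (xs ! 0))"
proof -
  have h: "cmp X J 2 (\<lambda>xs. xs ! 1 + Suc (xs ! 0))"
    by (intro cmp_add cmp_Suc comp_proj) auto
  have "cmp X J (Suc 0) (\<lambda>xs. rec_nat 0 (\<lambda>i u. (i # u # tl xs) ! 1 + Suc ((i # u # tl xs) ! 0)) (hd xs))"
    using comp_rec[of X J 0 "\<lambda>_. 0" "\<lambda>xs. xs ! 1 + Suc (xs ! 0)"] cmp_const[of X J 0 0] h
    by (simp add: numeral_2_eq_2)
  then show ?thesis unfolding One_nat_def
    apply (rule comp_cong)
    apply (auto simp: length_Suc_conv)
    subgoal for x by (induction x) auto
    done
qed

lemma cmp_tri: "cmp X J n f \<Longrightarrow> cmp X J n (\<lambda>xs. triangle (f xs))"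
  using comp_c1[OF cmp_tri1] by simp

lemma cmp_pe: "cmp X J n f \<Longrightarrow> cmp X J n g \<Longrightarrow> cmp X J n (\<lambda>xs. prod_encode (f xs, g xs))"
proof -
  assume a: "cmp X J n f" "cmp X J n g"
  have "cmp X J n (\<lambda>xs. triangle (f xs + g xs) + f xs)"
    by (intro cmp_add cmp_tri a)
  then show ?thesis by (rule comp_cong) (simp add: prod_encode_def)
qed

lemma cmp_X: "cmp X J n f \<Longrightarrow> cmp X J n (\<lambda>xs. X (f xs))"
  using comp_c1[OF comp_orc] by simp

lemma cmp_rel:
  assumes o: "\<forall>z t. X (4 * prod_encode (z, t) + 2 + c) = ind ((z, t) \<in> E)"
    and a: "cmp X J n f" "cmp X J n g"
  shows "cmp X J n (\<lambda>xs. ind ((f xs, g xs) \<in> E))"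
proof -
  have "cmp X J n (\<lambda>xs. X (4 * prod_encode (f xs, g xs) + 2 + c))"
    by (intro cmp_X cmp_add cmp_mult cmp_const cmp_pe a)
  then show ?thesis by (rule comp_cong) (simp only: o)
qed

lemma cmp_finset:
  assumes "finite S" "cmp X J n f"
  shows "cmp X J n (\<lambda>xs. ind (f xs \<in> S))"
  using assms(1)
proof (induction S rule: finite_induct)
  case empty then show ?case using cmp_const[of X J n 0] by simp
next
  case (insert a S)
  have "cmp X J n (\<lambda>xs. ind (f xs = a \<or> f xs \<in> S))"
    by (intro cmp_or cmp_eq cmp_const assms(2) insert.IH)
  then show ?case by simp
qed

lemma cmp_finfun:
  assumes "finite {x. h x \<noteq> 0}" "cmp X J n f"
  shows "cmp X J n (\<lambda>xs. h (f xs))"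
proof -
  have "\<forall>h. {x. h x \<noteq> 0} = S \<longrightarrow> cmp X J n (\<lambda>xs. h (f xs))" if "finite S" for S
    using that
  proof (induction S rule: finite_induct)
    case empty then show ?case using cmp_const[of X J n 0] by auto
  next
    case (insert a S)
    show ?case
    proof (intro allI impI)
      fix h :: "nat \<Rightarrow> nat" assume hs: "{x. h x \<noteq> 0} = insert a S"
      have m: "h x \<noteq> 0 \<longleftrightarrow> x = a \<or> x \<in> S" for x
      proof -
        have "x \<in> {x. h x \<noteq> 0} \<longleftrightarrow> x \<in> insert a S" by (simp only: hs)
        then show ?thesis by simp
      qed
      have "{x. (h(a := 0)) x \<noteq> 0} = S"
      proof (rule set_eqI)
        fix x show "x \<in> {x. (h(a := 0)) x \<noteq> 0} \<longleftrightarrow> x \<in> S"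
          using m[of x] insert.hyps(2) by (cases "x = a") auto
      qed
      then have c: "cmp X J n (\<lambda>xs. (h(a := 0)) (f xs))" by (rule mp[OF insert.IH[THEN spec[where x="h(a := 0)"]]])
      have "cmp X J n (\<lambda>xs. if f xs = a then h a else (h(a := 0)) (f xs))"
        by (rule cmp_if[OF cmp_eq[OF assms(2) cmp_const] cmp_const c])
      then show "cmp X J n (\<lambda>xs. h (f xs))" by (rule comp_cong) auto
    qed
  qed
  then show ?thesis using assms(1) by blast
qed

definition geq :: "(nat \<times> nat) set \<Rightarrow> nat \<Rightarrow> nat \<Rightarrow> bool" where
  "geq E b m \<longleftrightarrow> (\<exists>y. m \<le> card {i. i < y \<and> (b, i) \<in> E})"

lemma cmp_cnt:
  assumes o: "\<forall>z t. X (4 * prod_encode (z, t) + 2 + c) = ind ((z, t) \<in> E)"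
  shows "cmp X J 2 (\<lambda>xs. card {i. i < xs ! 0 \<and> (xs ! 1, i) \<in> E})"
proof -
  have "cmp X J (Suc 1) (\<lambda>xs. ind ((xs ! 1, xs ! 0) \<in> E))"
    by (intro cmp_rel[OF o]) (auto intro: comp_proj)
  from cmp_count[OF this] show ?thesis unfolding numeral_2_eq_2 One_nat_def
  proof (rule comp_cong)
    fix xs :: "nat list" assume "length xs = Suc (Suc 0)"
    then obtain a b where "xs = [a, b]" by (auto simp: length_Suc_conv)
    then show "card {i. i < hd xs \<and> ((i # tl xs) ! Suc 0, (i # tl xs) ! 0) \<in> E} = card {i. i < xs ! 0 \<and> (xs ! Suc 0, i) \<in> E}"
      by simp
  qed
qed

lemma comp_cong':
  assumes "cmp X J n f" "n = m" "\<And>xs. length xs = m \<Longrightarrow> f xs = g xs" shows "cmp X J m g"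
  using comp_cong assms by metis

lemma len2: "length xs = 2 \<Longrightarrow> \<exists>a b. xs = [a, b]"
  by (auto simp: numeral_eq_Suc length_Suc_conv)
lemma len3: "length xs = 3 \<Longrightarrow> \<exists>a b c. xs = [a, b, c]"
  by (auto simp: numeral_eq_Suc length_Suc_conv)
lemma len4: "length xs = 4 \<Longrightarrow> \<exists>a b c d. xs = [a, b, c, d]"
  by (auto simp: numeral_eq_Suc length_Suc_conv)
lemma len1: "length xs = 1 \<Longrightarrow> \<exists>a. xs = [a]"
  by (auto simp: length_Suc_conv)

lemma cmp_geq:
  assumes o: "\<forall>z t. X (4 * prod_encode (z, t) + 2 + c) = ind ((z, t) \<in> E)"
  shows "cmp X (jump_oracle X) 2 (\<lambda>xs. ind (geq E (xs ! 0) (xs ! 1)))"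
proof -
  let ?J0 = "\<lambda>(_::prog) (_::nat). 0::nat"
  let ?cnt = "\<lambda>b y. card {i. i < y \<and> (b, i) \<in> E}"
  have c4: "cmp X ?J0 4 (\<lambda>xs. ?cnt (xs ! 1) (xs ! 2))"
    using comp_c2[OF cmp_cnt[OF o], where J="?J0" and n=4 and f="\<lambda>xs. xs ! 2" and g="\<lambda>xs. xs ! 1"]
    by (simp add: comp_proj)
  have p1: "cmp X ?J0 4 (\<lambda>xs. ind (xs ! 3 = prod_encode (xs ! 1, xs ! 0) \<and> xs ! 0 \<le> ?cnt (xs ! 1) (xs ! 2)))"
    by (rule cmp_and[OF cmp_eq[OF comp_proj cmp_pe[OF comp_proj comp_proj]] cmp_le[OF comp_proj c4]]) simp_all
  have p2: "cmp X ?J0 4 (\<lambda>xs. ind (\<exists>m < xs ! 0. xs ! 3 = prod_encode (xs ! 1, m) \<and> m \<le> ?cnt (xs ! 1) (xs ! 2)))"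
  proof (rule comp_cong'[OF cmp_bex[of X ?J0 3 "\<lambda>xs. xs ! 3 = prod_encode (xs ! 1, xs ! 0) \<and> xs ! 0 \<le> ?cnt (xs ! 1) (xs ! 2)"]])
    show "cmp X ?J0 (Suc 3) (\<lambda>xs. ind (xs ! 3 = prod_encode (xs ! 1, xs ! 0) \<and> xs ! 0 \<le> ?cnt (xs ! 1) (xs ! 2)))"
      using p1 by simp
  qed (auto dest!: len4)
  have p3: "cmp X ?J0 3 (\<lambda>xs. ind (\<exists>m < Suc (xs ! 2). xs ! 2 = prod_encode (xs ! 0, m) \<and> m \<le> ?cnt (xs ! 0) (xs ! 1)))"
    using comp_c4[OF p2, where n=3 and f="\<lambda>xs. Suc (xs ! 2)" and g="\<lambda>xs. xs ! 0" and k="\<lambda>xs. xs ! 1" and l="\<lambda>xs. xs ! 2"]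
    by (simp add: comp_proj cmp_Suc)
  have p4: "cmp X ?J0 3 (\<lambda>xs. ind (\<exists>b < xs ! 0. \<exists>m < Suc (xs ! 2). xs ! 2 = prod_encode (b, m) \<and> m \<le> ?cnt b (xs ! 1)))"
  proof (rule comp_cong'[OF cmp_bex[of X ?J0 2 "\<lambda>xs. \<exists>m < Suc (xs ! 2). xs ! 2 = prod_encode (xs ! 0, m) \<and> m \<le> ?cnt (xs ! 0) (xs ! 1)"]])
    show "cmp X ?J0 (Suc 2) (\<lambda>xs. ind (\<exists>m < Suc (xs ! 2). xs ! 2 = prod_encode (xs ! 0, m) \<and> m \<le> ?cnt (xs ! 0) (xs ! 1)))"
      using p3 by simp
  qed (auto dest!: len3)
  have p5: "cmp X ?J0 2 (\<lambda>xs. ind (\<exists>b < Suc (xs ! 1). \<exists>m < Suc (xs ! 1). xs ! 1 = prod_encode (b, m) \<and> m \<le> ?cnt b (xs ! 0)))"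
    using comp_c3[OF p4, where n=2 and f="\<lambda>xs. Suc (xs ! 1)" and g="\<lambda>xs. xs ! 0" and k="\<lambda>xs. xs ! 1"]
    by (simp add: comp_proj cmp_Suc)
  have p6: "cmp X ?J0 2 (\<lambda>xs. 1 - ind (\<exists>b < Suc (xs ! 1). \<exists>m < Suc (xs ! 1). xs ! 1 = prod_encode (b, m) \<and> m \<le> ?cnt b (xs ! 0)))"
    by (rule cmp_sub[OF cmp_const p5])
  have s: "cmp X (jump_oracle X) 1 (\<lambda>xs. ind (\<exists>y. (1 - ind (\<exists>b < Suc (xs ! 0). \<exists>m < Suc (xs ! 0). xs ! 0 = prod_encode (b, m) \<and> m \<le> ?cnt b y)) = 0))"
    using comp_sigma1[OF p6] by simp
  have "cmp X (jump_oracle X) 2 (\<lambda>xs. ind (\<exists>y. (1 - ind (\<exists>b < Suc (prod_encode (xs ! 0, xs ! 1)). \<exists>m < Suc (prod_encode (xs ! 0, xs ! 1)). prod_encode (xs ! 0, xs ! 1) = prod_encode (b, m) \<and> m \<le> ?cnt b y)) = 0))"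
    using comp_c1[OF s, where n=2 and f="\<lambda>xs. prod_encode (xs ! 0, xs ! 1)"] by (simp add: cmp_pe comp_proj)
  then show ?thesis
  proof (rule comp_cong)
    fix xs :: "nat list"
    let ?a = "xs ! 0" and ?b = "xs ! 1"
    have "(\<exists>y. (1 - ind (\<exists>b < Suc (prod_encode (?a, ?b)). \<exists>m < Suc (prod_encode (?a, ?b)). prod_encode (?a, ?b) = prod_encode (b, m) \<and> m \<le> ?cnt b y)) = 0)
      \<longleftrightarrow> geq E ?a ?b"
      unfolding geq_def
      by (auto simp: le_imp_less_Suc le_prod_encode_1 le_prod_encode_2)
    then show "ind (\<exists>y. (1 - ind (\<exists>b < Suc (prod_encode (?a, ?b)). \<exists>m < Suc (prod_encode (?a, ?b)). prod_encode (?a, ?b) = prod_encode (b, m) \<and> m \<le> ?cnt b y)) = 0)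
      = ind (geq E ?a ?b)" by simp
  qed
qed



lemma cnt_fin: "finite {i::nat. i < y \<and> i \<in> S}" by simp

lemma cnt_mono: "y \<le> y' \<Longrightarrow> card {i::nat. i < y \<and> i \<in> S} \<le> card {i. i < y' \<and> i \<in> S}"
  by (rule card_mono) auto

lemma cnt_le_card: "finite S \<Longrightarrow> card {i::nat. i < y \<and> i \<in> S} \<le> card S"
  by (rule card_mono) auto

lemma cnt_full: "finite (S::nat set) \<Longrightarrow> \<exists>y. card {i. i < y \<and> i \<in> S} = card S"
proof -
  assume "finite S"
  then obtain m where m: "\<forall>n\<in>S. n < m" using finite_nat_set_iff_bounded by auto
  then have "{i. i < m \<and> i \<in> S} = S" by auto
  then show ?thesis by metis
qed

lemma cnt_inf: "infinite (S::nat set) \<Longrightarrow> \<exists>y. m \<le> card {i. i < y \<and> i \<in> S}"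
proof -
  assume "infinite S"
  then obtain T where T: "T \<subseteq> S" "finite T" "card T = m" using infinite_arbitrarily_large by metis
  then obtain y where y: "\<forall>n\<in>T. n < y" using finite_nat_set_iff_bounded by auto
  have "card T \<le> card {i. i < y \<and> i \<in> S}" by (rule card_mono) (use T y in auto)
  then show ?thesis using T by auto
qed

lemma ex_cnt_iff: "(\<exists>y. m \<le> card {i::nat. i < y \<and> i \<in> S}) \<longleftrightarrow> infinite S \<or> m \<le> card S"
proof
  assume "\<exists>y. m \<le> card {i::nat. i < y \<and> i \<in> S}"
  then obtain y where "m \<le> card {i::nat. i < y \<and> i \<in> S}" by auto
  then show "infinite S \<or> m \<le> card S" using cnt_le_card[of S y] by auto
next
  assume "infinite S \<or> m \<le> card S"
  then show "\<exists>y. m \<le> card {i::nat. i < y \<and> i \<in> S}"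
  proof
    assume "infinite S" then show ?thesis by (rule cnt_inf)
  next
    assume a: "m \<le> card S"
    then have "finite S \<or> m = 0" by (cases "finite S") auto
    then show ?thesis
    proof
      assume "finite S" then obtain y where "card {i. i < y \<and> i \<in> S} = card S" using cnt_full by blast
      then show ?thesis using a by (intro exI[of _ y]) simp
    qed auto
  qed
qed

lemma cnt_Suc: "card {i::nat. i < Suc k \<and> i \<in> S} = card {i. i < k \<and> i \<in> S} + ind (k \<in> S)"
  using card_less_Suc_ind[of k "\<lambda>i. i \<in> S"] by simp

lemma rank_exists:
  assumes "\<exists>y0. Suc r \<le> card {i::nat. i < y0 \<and> i \<in> S}"
  shows "\<exists>y\<in>S. card {i. i < y \<and> i \<in> S} = r"
proof -
  obtain y0 where y0: "Suc r \<le> card {i::nat. i < y0 \<and> i \<in> S}" using assms by auto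
  have "y0 \<noteq> 0"
  proof
    assume "y0 = 0" then show False using y0 by simp
  qed
  then have ex: "\<exists>y. Suc r \<le> card {i::nat. i < Suc y \<and> i \<in> S}" using y0 by (intro exI[of _ "y0 - 1"]) simp
  define y where "y = (LEAST y. Suc r \<le> card {i::nat. i < Suc y \<and> i \<in> S})"
  have a: "Suc r \<le> card {i::nat. i < Suc y \<and> i \<in> S}" unfolding y_def using ex by (rule LeastI_ex)
  have b: "card {i::nat. i < y \<and> i \<in> S} \<le> r"
  proof (cases y)
    case 0 then show ?thesis by simp
  next
    case (Suc y')
    then have "y' < y" by simp
    then have "\<not> Suc r \<le> card {i::nat. i < Suc y' \<and> i \<in> S}" unfolding y_def by (rule not_less_Least)
    then show ?thesis using Suc by simp
  qed
  from a b have "y \<in> S" "card {i. i < y \<and> i \<in> S} = r" using cnt_Suc[of y S] by (auto split: if_splits)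
  then show ?thesis by blast
qed

lemma rank_strict:
  assumes "y \<in> S" "y < y'"
  shows "card {i::nat. i < y \<and> i \<in> S} < card {i. i < y' \<and> i \<in> S}"
proof -
  have "insert y {i::nat. i < y \<and> i \<in> S} \<subseteq> {i. i < y' \<and> i \<in> S}" using assms by auto
  then have "card (insert y {i::nat. i < y \<and> i \<in> S}) \<le> card {i. i < y' \<and> i \<in> S}"
    by (rule card_mono[rotated]) simp
  then show ?thesis by simp
qed

lemma rank_unique:
  assumes "y \<in> S" "y' \<in> S" "card {i::nat. i < y \<and> i \<in> S} = card {i. i < y' \<and> i \<in> S}"
  shows "y = y'"
  using rank_strict[OF assms(1)] rank_strict[OF assms(2)] assms(3)
  by (metis less_irrefl nat_neq_iff)

lemma eq_dom: "equiv S R \<Longrightarrow> (a, b) \<in> R \<Longrightarrow> a \<in> S \<and> b \<in> S"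
  using equiv_type by blast
definition ldr :: "(nat \<times> nat) set \<Rightarrow> nat \<Rightarrow> bool" where
  "ldr R x \<longleftrightarrow> (x, x) \<in> R \<and> (\<forall>y<x. (y, x) \<notin> R)"

definition lead :: "(nat \<times> nat) set \<Rightarrow> nat \<Rightarrow> nat" where
  "lead R x = (LEAST y. (x, y) \<in> R \<or> y = x)"

lemma lead_rel:
  assumes "equiv S R" "x \<in> S"
  shows "(x, lead R x) \<in> R"
proof -
  have "(x, x) \<in> R" using assms by (meson equiv_def refl_onD)
  have "(x, lead R x) \<in> R \<or> lead R x = x" unfolding lead_def by (rule LeastI[where k=x]) simp
  then show ?thesis using \<open>(x, x) \<in> R\<close> by auto
qed

lemma lead_ldr:
  assumes "equiv S R" "x \<in> S"
  shows "ldr R (lead R x)"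
proof -
  have r: "(x, lead R x) \<in> R" by (rule lead_rel[OF assms])
  have "(lead R x, lead R x) \<in> R" using r assms(1) by (meson equiv_def symD transD)
  moreover have "(y, lead R x) \<notin> R" if "y < lead R x" for y
  proof
    assume "(y, lead R x) \<in> R"
    then have "(x, y) \<in> R" using r assms(1) by (meson equiv_def symD transD)
    then have "lead R x \<le> y" unfolding lead_def by (simp add: Least_le)
    then show False using that by simp
  qed
  ultimately show ?thesis unfolding ldr_def by auto
qed

lemma ldr_eq:
  assumes "equiv S R" "ldr R a" "ldr R b" "(a, b) \<in> R"
  shows "a = b"
proof -
  have "(b, a) \<in> R" using assms(1,4) by (meson equiv_def symD)
  then show ?thesis using assms(2,3,4) unfolding ldr_def by (metis nat_neq_iff)
qed

lemma lead_of_ldr: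
  assumes "equiv S R" "ldr R a" "(a, x) \<in> R"
  shows "lead R x = a"
proof -
  have x: "x \<in> S" using eq_dom[OF assms(1,3)] by simp
  have "(a, lead R x) \<in> R" using lead_rel[OF assms(1) x] assms(1,3) by (meson equiv_def transD)
  then have "a = lead R x" by (rule ldr_eq[OF assms(1,2) lead_ldr[OF assms(1) x]])
  then show ?thesis by (rule sym)
qed

lemma ldr_in: "ldr R a \<Longrightarrow> equiv S R \<Longrightarrow> a \<in> S"
  unfolding ldr_def using eq_dom[of S R a a] by simp

lemma geq_iff: "geq R b m \<longleftrightarrow> infinite (R `` {b}) \<or> m \<le> card (R `` {b})"
  unfolding geq_def using ex_cnt_iff[of m "R `` {b}"] by simp



lemma geq_mono: "geq R b m \<Longrightarrow> m' \<le> m \<Longrightarrow> geq R b m'"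
  unfolding geq_def by (meson order_trans)

lemma cnt_rel_eq: "{i. i < y \<and> (t, i) \<in> R} = {i. i < y \<and> i \<in> R `` {t}}" by auto

locale setting =
  fixes X :: "nat \<Rightarrow> nat" and A :: "nat set" and E :: "(nat \<times> nat) set"
    and B :: "nat set" and F :: "(nat \<times> nat) set" and cE cF :: nat and e :: "nat \<Rightarrow> nat"
  assumes eqA: "equiv A E" and eqB: "equiv B F"
    and oE: "\<forall>z t. X (4 * prod_encode (z, t) + 2 + cE) = ind ((z, t) \<in> E)"
    and oF: "\<forall>z t. X (4 * prod_encode (z, t) + 2 + cF) = ind ((z, t) \<in> F)"
    and finA: "finite {C \<in> A // E. infinite C}"
    and emb: "is_embedding A E B F e"
begin

definition H where
  "H = {a. ldr E a \<and> (infinite (E `` {a}) \<or>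
          finite {b. ldr F b \<and> (infinite (F `` {b}) \<or> card (E `` {a}) \<le> card (F `` {b}))})}"

definition hard where "hard a = (if a \<in> H then lead F (e a) else 0)"
definition T where "T = hard ` H"
definition good where "good a \<longleftrightarrow> ldr E a \<and> a \<notin> H"
definition sz where "sz a = (LEAST m. \<not> good a \<or> \<not> geq E a (Suc m))"
definition tgt where "tgt i u = (LEAST b. \<not> good i \<or> (u \<le> b \<and> ldr F b \<and> b \<notin> T \<and> geq F b (sz i)))"
definition st where "st k = rec_nat 0 (\<lambda>i u. if good i then Suc (tgt i u) else u) k"
definition phi where "phi a = (if a \<in> H then hard a else st (Suc a) - 1)"
definition fm where
  "fm x = (LEAST y. (phi (lead E x), y) \<in> F \<and>
      card {i. i < y \<and> (phi (lead E x), i) \<in> F} = card {i. i < x \<and> (lead E x, i) \<in> E})"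

lemma e_inj: "inj_on e A" and e_B: "x \<in> A \<Longrightarrow> e x \<in> B"
  and e_rel: "x \<in> A \<Longrightarrow> y \<in> A \<Longrightarrow> (x, y) \<in> E \<longleftrightarrow> (e x, e y) \<in> F"
  using emb unfolding is_embedding_def by auto

lemma class_map:
  assumes "a \<in> A"
  shows "e ` (E `` {a}) \<subseteq> F `` {e a}" "inj_on e (E `` {a})"
proof -
  show "e ` (E `` {a}) \<subseteq> F `` {e a}"
  proof
    fix z assume "z \<in> e ` (E `` {a})"
    then obtain x where x: "(a, x) \<in> E" "z = e x" by auto
    have "x \<in> A" using eq_dom[OF eqA x(1)] by simp
    then show "z \<in> F `` {e a}" using e_rel[OF assms \<open>x \<in> A\<close>] x by simp
  qed
  show "inj_on e (E `` {a})"
    by (rule inj_on_subset[OF e_inj]) (use eq_dom[OF eqA] in blast)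
qed

lemma dom_e:
  assumes "a \<in> A" "geq E a m"
  shows "geq F (e a) m"
proof -
  note cm = class_map[OF assms(1)]
  show ?thesis unfolding geq_iff
  proof (cases "finite (F `` {e a})")
    case True
    then have fin: "finite (E `` {a})" using cm finite_imageD finite_subset by metis
    have "card (E `` {a}) \<le> card (F `` {e a})" using card_inj_on_le[OF cm(2) cm(1) True] .
    then show "infinite (F `` {e a}) \<or> m \<le> card (F `` {e a})"
      using assms(2) fin unfolding geq_iff by auto
  qed simp
qed

lemma class_eq: "equiv S R \<Longrightarrow> (x, y) \<in> R \<Longrightarrow> R `` {x} = R `` {y}"
  using equiv_class_eq_iff by metis

lemma geq_class: "R `` {x} = R `` {y} \<Longrightarrow> geq R x m \<longleftrightarrow> geq R y m"
  unfolding geq_iff by simp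

lemma hard_props:
  assumes "a \<in> H"
  shows "ldr F (hard a)" "geq E a m \<Longrightarrow> geq F (hard a) m" "(e a, hard a) \<in> F"
proof -
  have l: "ldr E a" using assms unfolding H_def by simp
  have aA: "a \<in> A" by (rule ldr_in[OF l eqA])
  have eB: "e a \<in> B" by (rule e_B[OF aA])
  show "ldr F (hard a)" unfolding hard_def using assms lead_ldr[OF eqB eB] by simp
  show r: "(e a, hard a) \<in> F" unfolding hard_def using assms lead_rel[OF eqB eB] by simp
  assume "geq E a m"
  then have "geq F (e a) m" by (rule dom_e[OF aA])
  then show "geq F (hard a) m" using geq_class[OF class_eq[OF eqB r]] by simp
qed

lemma psi_props:
  assumes aA: "a \<in> A"
  shows "ldr F (lead F (e a))" "geq E a m \<Longrightarrow> geq F (lead F (e a)) m" "(e a, lead F (e a)) \<in> F"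
proof -
  have eB: "e a \<in> B" by (rule e_B[OF aA])
  show "ldr F (lead F (e a))" using lead_ldr[OF eqB eB] .
  show r: "(e a, lead F (e a)) \<in> F" using lead_rel[OF eqB eB] .
  assume "geq E a m"
  then have "geq F (e a) m" by (rule dom_e[OF aA])
  then show "geq F (lead F (e a)) m" using geq_class[OF class_eq[OF eqB r]] by simp
qed

lemma psi_inj:
  assumes "ldr E a" "ldr E a'" "lead F (e a) = lead F (e a')"
  shows "a = a'"
proof -
  have aA: "a \<in> A" by (rule ldr_in[OF assms(1) eqA])
  have aA': "a' \<in> A" by (rule ldr_in[OF assms(2) eqA])
  have r1: "(e a, lead F (e a)) \<in> F" by (rule psi_props(3)[OF aA])
  have r2: "(e a', lead F (e a)) \<in> F" using psi_props(3)[OF aA'] assms(3) by simp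
  have "(lead F (e a), e a') \<in> F" using r2 eqB by (meson equiv_def symD)
  then have "(e a, e a') \<in> F" using r1 eqB by (meson equiv_def transD)
  then have "(a, a') \<in> E" using e_rel[OF aA aA'] by simp
  then show ?thesis by (rule ldr_eq[OF eqA assms(1,2)])
qed

lemma class_inj:
  assumes "ldr E a" "ldr E a'" "E `` {a} = E `` {a'}"
  shows "a = a'"
proof -
  have "a' \<in> E `` {a'}" using assms(2) unfolding ldr_def by simp
  then have "a' \<in> E `` {a}" using assms(3) by simp
  then have "(a, a') \<in> E" by simp
  then show ?thesis by (rule ldr_eq[OF eqA assms(1,2)])
qed

definition Cand where
  "Cand a = {b. ldr F b \<and> (infinite (F `` {b}) \<or> card (E `` {a}) \<le> card (F `` {b}))}"

lemma finite_Hinf: "finite {a. ldr E a \<and> infinite (E `` {a})}"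
proof -
  have inj: "inj_on (\<lambda>a. E `` {a}) {a. ldr E a \<and> infinite (E `` {a})}"
    by (rule inj_onI) (use class_inj in auto)
  have sub: "(\<lambda>a. E `` {a}) ` {a. ldr E a \<and> infinite (E `` {a})} \<subseteq> {C \<in> A // E. infinite C}"
  proof
    fix C assume "C \<in> (\<lambda>a. E `` {a}) ` {a. ldr E a \<and> infinite (E `` {a})}"
    then obtain a where a: "ldr E a" "infinite (E `` {a})" "C = E `` {a}" by auto
    have "a \<in> A" by (rule ldr_in[OF a(1) eqA])
    then have "C \<in> A // E" unfolding a(3) by (rule quotientI)
    then show "C \<in> {C \<in> A // E. infinite C}" using a by simp
  qed
  show ?thesis by (rule finite_imageD[OF finite_subset[OF sub finA] inj])
qed

lemma finite_Hfin: "finite {a. ldr E a \<and> finite (E `` {a}) \<and> finite (Cand a)}" (is "finite ?S")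
proof (cases "?S = {}")
  case False
  define s0 where "s0 = (LEAST s. \<exists>a\<in>?S. card (E `` {a}) = s)"
  have "\<exists>a\<in>?S. card (E `` {a}) = s0" unfolding s0_def
    by (rule LeastI_ex) (use False in blast)
  then obtain a0 where a0: "a0 \<in> ?S" "card (E `` {a0}) = s0" by blast
  have le: "s0 \<le> card (E `` {a})" if "a \<in> ?S" for a
    unfolding s0_def by (rule Least_le) (use that in blast)
  have inj: "inj_on (\<lambda>a. lead F (e a)) ?S"
    by (rule inj_onI) (use psi_inj in auto)
  have sub: "(\<lambda>a. lead F (e a)) ` ?S \<subseteq> Cand a0"
  proof
    fix b assume "b \<in> (\<lambda>a. lead F (e a)) ` ?S"
    then obtain a where a: "a \<in> ?S" "b = lead F (e a)" by auto
    have aA: "a \<in> A" using ldr_in[of E a A] eqA a(1) by simp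
    have "geq E a (card (E `` {a}))" unfolding geq_iff by simp
    then have "geq F b (card (E `` {a}))" using psi_props(2)[OF aA] a(2) by simp
    then have "infinite (F `` {b}) \<or> s0 \<le> card (F `` {b})" unfolding geq_iff using le[OF a(1)] by auto
    then show "b \<in> Cand a0" unfolding Cand_def using a0(2) psi_props(1)[OF aA] a(2) by simp
  qed
  have "finite (Cand a0)" using a0(1) by simp
  then show ?thesis by (rule finite_imageD[OF finite_subset[OF sub] inj])
next
  case True
  show ?thesis unfolding True by (rule finite.emptyI)
qed

lemma finite_H: "finite H"
proof -
  have "H \<subseteq> {a. ldr E a \<and> infinite (E `` {a})} \<union> {a. ldr E a \<and> finite (E `` {a}) \<and> finite (Cand a)}"
    unfolding H_def Cand_def by auto
  then show ?thesis using finite_Hinf finite_Hfin by (meson finite_UnI finite_subset)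
qed

lemma good_props:
  assumes "good a"
  shows "finite (E `` {a})" "infinite (Cand a)"
  using assms unfolding good_def H_def Cand_def by auto

lemma finite_T: "finite T"
  unfolding T_def using finite_H by simp

lemma sz_good:
  assumes "good a" shows "sz a = card (E `` {a})"
proof -
  have fin: "finite (E `` {a})" by (rule good_props(1)[OF assms])
  have iff: "(\<not> good a \<or> \<not> geq E a (Suc m)) \<longleftrightarrow> card (E `` {a}) \<le> m" for m
    using assms fin unfolding geq_iff by auto
  show ?thesis unfolding sz_def iff by (rule Least_equality) auto
qed

lemma tgt_good:
  assumes "good i"
  shows "u \<le> tgt i u" "ldr F (tgt i u)" "tgt i u \<notin> T" "geq F (tgt i u) (sz i)"
proof -
  have "infinite (Cand i - T - {..<u})"
    using good_props(2)[OF assms] finite_T by (metis Diff_infinite_finite finite_lessThan)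
  then obtain b where b: "b \<in> Cand i - T - {..<u}" by (metis finite.emptyI ex_in_conv)
  then have "ldr F b" "infinite (F `` {b}) \<or> card (E `` {i}) \<le> card (F `` {b})" "b \<notin> T" "u \<le> b"
    unfolding Cand_def by auto
  then have "u \<le> b \<and> ldr F b \<and> b \<notin> T \<and> geq F b (sz i)"
    unfolding geq_iff sz_good[OF assms] by auto
  then have "\<not> good i \<or> (u \<le> b \<and> ldr F b \<and> b \<notin> T \<and> geq F b (sz i))" by simp
  then have "\<not> good i \<or> (u \<le> tgt i u \<and> ldr F (tgt i u) \<and> tgt i u \<notin> T \<and> geq F (tgt i u) (sz i))"
    unfolding tgt_def by (rule LeastI)
  then show "u \<le> tgt i u" "ldr F (tgt i u)" "tgt i u \<notin> T" "geq F (tgt i u) (sz i)"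
    using assms by auto
qed

lemma st_Suc: "st (Suc i) = (if good i then Suc (tgt i (st i)) else st i)"
  by (simp add: st_def)

lemma st_step: "st i \<le> st (Suc i)"
proof (cases "good i")
  case True
  then have "st i \<le> tgt i (st i)" by (rule tgt_good(1))
  then show ?thesis using True by (simp add: st_Suc)
qed (simp add: st_Suc)

lemma st_mono: "i \<le> j \<Longrightarrow> st i \<le> st j"
  by (rule lift_Suc_mono_le[of st]) (rule st_step)

lemma phi_good: "good a \<Longrightarrow> phi a = tgt a (st a)"
  unfolding phi_def good_def by (simp add: st_Suc good_def)

lemma phi_good_less:
  assumes "good a" "good a'" "a < a'"
  shows "phi a < phi a'"
proof -
  have "phi a < st (Suc a)" using phi_good[OF assms(1)] by (simp add: st_Suc assms(1))
  also have "st (Suc a) \<le> st a'" using assms(3) by (intro st_mono) simp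
  also have "st a' \<le> phi a'" using phi_good[OF assms(2)] tgt_good(1)[OF assms(2)] by simp
  finally show ?thesis .
qed

lemma phi_ldr: "ldr E a \<Longrightarrow> ldr F (phi a)"
proof (cases "a \<in> H")
  case True then show ?thesis using hard_props(1) by (simp add: phi_def)
next
  case False
  assume "ldr E a"
  then have g: "good a" using False by (simp add: good_def)
  show ?thesis using phi_good[OF g] tgt_good(2)[OF g] by simp
qed

lemma phi_dom: "ldr E a \<Longrightarrow> geq E a m \<Longrightarrow> geq F (phi a) m"
proof (cases "a \<in> H")
  case True then show "geq E a m \<Longrightarrow> geq F (phi a) m" using hard_props(2) by (simp add: phi_def)
next
  case False
  assume "ldr E a" "geq E a m"
  then have g: "good a" using False by (simp add: good_def)
  have "m \<le> sz a" using \<open>geq E a m\<close> good_props(1)[OF g] sz_good[OF g] unfolding geq_iff by simp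
  then show ?thesis using phi_good[OF g] tgt_good(4)[OF g] geq_mono by metis
qed

lemma phi_T: "a \<in> H \<Longrightarrow> phi a \<in> T"
  unfolding phi_def T_def by simp

lemma phi_inj:
  assumes "ldr E a" "ldr E a'" "phi a = phi a'"
  shows "a = a'"
proof (cases "a \<in> H")
  case True
  show ?thesis
  proof (cases "a' \<in> H")
    case True': True
    then have "lead F (e a) = lead F (e a')" using assms(3) \<open>a \<in> H\<close> by (simp add: phi_def hard_def)
    then show ?thesis by (rule psi_inj[OF assms(1,2)])
  next
    case False
    then have "good a'" using assms(2) by (simp add: good_def)
    then show ?thesis using phi_T[OF True] assms(3) phi_good tgt_good(3) by metis
  qed
next
  case False
  then have ga: "good a" using assms(1) by (simp add: good_def)
  show ?thesis
  proof (cases "a' \<in> H")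
    case True
    then show ?thesis using phi_T[OF True] assms(3) phi_good[OF ga] tgt_good(3)[OF ga] by metis
  next
    case False
    then have ga': "good a'" using assms(2) by (simp add: good_def)
    show ?thesis
    proof (rule ccontr)
      assume "a \<noteq> a'"
      then consider "a < a'" | "a' < a" by linarith
      then show False using phi_good_less[OF ga ga'] phi_good_less[OF ga' ga] assms(3) by cases auto
    qed
  qed
qed

lemma eq_sym: "equiv S R \<Longrightarrow> (a, b) \<in> R \<Longrightarrow> (b, a) \<in> R"
  by (meson equiv_def symD)
lemma eq_trans: "equiv S R \<Longrightarrow> (a, b) \<in> R \<Longrightarrow> (b, c) \<in> R \<Longrightarrow> (a, c) \<in> R"
  by (meson equiv_def transD)

lemma fm_props:
  assumes xA: "x \<in> A"
  shows "(phi (lead E x), fm x) \<in> F"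
    "card {i. i < fm x \<and> (phi (lead E x), i) \<in> F} = card {i. i < x \<and> (lead E x, i) \<in> E}"
proof -
  define l where "l = lead E x"
  define r where "r = card {i. i < x \<and> (l, i) \<in> E}"
  define t where "t = phi l"
  have ll: "ldr E l" unfolding l_def by (rule lead_ldr[OF eqA xA])
  have lx: "(l, x) \<in> E" unfolding l_def by (rule eq_sym[OF eqA lead_rel[OF eqA xA]])
  have "card {i. i < Suc x \<and> i \<in> E `` {l}} = Suc r"
    using cnt_Suc[of x "E `` {l}"] lx unfolding r_def cnt_rel_eq by simp
  then have "geq E l (Suc r)" unfolding geq_def cnt_rel_eq by (metis order_refl)
  then have "geq F t (Suc r)" unfolding t_def by (rule phi_dom[OF ll])
  then have "\<exists>y0. Suc r \<le> card {i. i < y0 \<and> i \<in> F `` {t}}" unfolding geq_def cnt_rel_eq .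
  then obtain y where "y \<in> F `` {t}" "card {i. i < y \<and> i \<in> F `` {t}} = r" using rank_exists by blast
  then have "(t, y) \<in> F \<and> card {i. i < y \<and> (t, i) \<in> F} = r" unfolding cnt_rel_eq by simp
  then have "(t, fm x) \<in> F \<and> card {i. i < fm x \<and> (t, i) \<in> F} = r"
    unfolding fm_def t_def l_def r_def by (rule LeastI)
  then show "(phi (lead E x), fm x) \<in> F"
    "card {i. i < fm x \<and> (phi (lead E x), i) \<in> F} = card {i. i < x \<and> (lead E x, i) \<in> E}"
    unfolding t_def l_def r_def by auto
qed

lemma fm_rel:
  assumes xA: "x \<in> A" and yA: "y \<in> A"
  shows "(x, y) \<in> E \<longleftrightarrow> (fm x, fm y) \<in> F"
proof
  assume xy: "(x, y) \<in> E"
  have ll: "ldr E (lead E x)" by (rule lead_ldr[OF eqA xA])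
  have "(lead E x, y) \<in> E" using eq_sym[OF eqA lead_rel[OF eqA xA]] xy by (rule eq_trans[OF eqA])
  then have "lead E y = lead E x" by (rule lead_of_ldr[OF eqA ll])
  then show "(fm x, fm y) \<in> F"
    using fm_props(1)[OF xA] fm_props(1)[OF yA] by (metis eq_sym[OF eqB] eq_trans[OF eqB])
next
  assume f: "(fm x, fm y) \<in> F"
  have lx: "ldr E (lead E x)" by (rule lead_ldr[OF eqA xA])
  have ly: "ldr E (lead E y)" by (rule lead_ldr[OF eqA yA])
  have "(phi (lead E x), phi (lead E y)) \<in> F"
    using fm_props(1)[OF xA] fm_props(1)[OF yA] f by (metis eq_sym[OF eqB] eq_trans[OF eqB])
  then have "phi (lead E x) = phi (lead E y)" by (rule ldr_eq[OF eqB phi_ldr[OF lx] phi_ldr[OF ly]])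
  then have "lead E x = lead E y" by (rule phi_inj[OF lx ly])
  then show "(x, y) \<in> E" using lead_rel[OF eqA xA] lead_rel[OF eqA yA]
    by (metis eq_sym[OF eqA] eq_trans[OF eqA])
qed

lemma fm_embedding: "is_embedding A E B F fm"
  unfolding is_embedding_def
proof (intro conjI ballI)
  show "fm ` A \<subseteq> B"
  proof
    fix z assume "z \<in> fm ` A"
    then obtain x where "x \<in> A" "z = fm x" by auto
    then show "z \<in> B" using eq_dom[OF eqB fm_props(1)] by blast
  qed
  show "inj_on fm A"
  proof (rule inj_onI)
    fix x y assume xA: "x \<in> A" and yA: "y \<in> A" and eq: "fm x = fm y"
    have "fm x \<in> B" using eq_dom[OF eqB fm_props(1)[OF xA]] by simp
    then have "(fm x, fm x) \<in> F" using eqB by (meson equiv_def refl_onD)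
    then have "(fm x, fm y) \<in> F" using eq by simp
    then have xy: "(x, y) \<in> E" using fm_rel[OF xA yA] by simp
    have lx: "ldr E (lead E x)" by (rule lead_ldr[OF eqA xA])
    have "(lead E x, y) \<in> E" using eq_sym[OF eqA lead_rel[OF eqA xA]] xy by (rule eq_trans[OF eqA])
    then have ly: "lead E y = lead E x" by (rule lead_of_ldr[OF eqA lx])
    have c: "card {i. i < x \<and> (lead E x, i) \<in> E} = card {i. i < y \<and> (lead E x, i) \<in> E}"
      using fm_props(2)[OF xA] fm_props(2)[OF yA] eq ly by simp
    have "x \<in> E `` {lead E x}" "y \<in> E `` {lead E x}"
      using eq_sym[OF eqA lead_rel[OF eqA xA]] \<open>(lead E x, y) \<in> E\<close> by auto
    then show "x = y" using rank_unique[of x "E `` {lead E x}" y] c unfolding cnt_rel_eq by simp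
  qed
  fix x y assume "x \<in> A" "y \<in> A"
  then show "(x, y) \<in> E \<longleftrightarrow> (fm x, fm y) \<in> F" by (rule fm_rel)
qed

end



lemma lift1: "cmp X J 1 (\<lambda>xs. u (xs ! 0)) \<Longrightarrow> cmp X J n f \<Longrightarrow> cmp X J n (\<lambda>xs. u (f xs))"
  using comp_c1[of X J "\<lambda>xs. u (xs ! 0)" n f] by simp

lemma lift2: "cmp X J 2 (\<lambda>xs. u (xs ! 0) (xs ! 1)) \<Longrightarrow> cmp X J n f \<Longrightarrow> cmp X J n g \<Longrightarrow> cmp X J n (\<lambda>xs. u (f xs) (g xs))"
  using comp_c2[of X J "\<lambda>xs. u (xs ! 0) (xs ! 1)" n f g] by simp

lemma mu_lift:
  assumes "cmp X J (Suc n) (\<lambda>xs. ind (P xs))" "\<And>xs. length xs = n \<Longrightarrow> Q xs \<Longrightarrow> \<exists>k. P (k # xs)"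
  shows "compP X J n Q (\<lambda>xs. LEAST k. P (k # xs))"
proof -
  have c: "cmp X J (Suc n) (\<lambda>xs. 1 - ind (P xs))" by (rule cmp_sub[OF cmp_const assms(1)])
  have e: "(1 - ind (P xs) = 0) \<longleftrightarrow> P xs" for xs by simp
  have "compP X J n Q (\<lambda>xs. LEAST k. 1 - ind (P (k # xs)) = 0)"
    by (rule compP_mu[OF c]) (use assms(2) e in blast)
  then show ?thesis by (rule compP_cong) (simp only: e)
qed

lemma mu_lift_tot:
  assumes "cmp X J (Suc n) (\<lambda>xs. ind (P xs))" "\<And>xs. length xs = n \<Longrightarrow> \<exists>k. P (k # xs)"
  shows "cmp X J n (\<lambda>xs. LEAST k. P (k # xs))"
  by (rule mu_lift[OF assms(1)]) (rule assms(2))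

lemma cmp_ldr:
  assumes o: "\<forall>z t. X (4 * prod_encode (z, t) + 2 + c) = ind ((z, t) \<in> R)"
  shows "cmp X J 1 (\<lambda>xs. ind (ldr R (xs ! 0)))"
proof -
  have r: "cmp X J (Suc 1) (\<lambda>xs. ind ((xs ! 0, xs ! 1) \<in> R))"
    by (rule cmp_rel[OF o]) (rule comp_proj, simp)+
  have b: "cmp X J 2 (\<lambda>xs. ind (\<exists>i < xs ! 0. (i, xs ! 1) \<in> R))"
  proof (rule comp_cong'[OF cmp_bex[OF r]])
    fix xs :: "nat list" assume "length xs = 2"
    then obtain a b where "xs = [a, b]" using len2 by blast
    then show "ind (\<exists>i < hd xs. ((i # tl xs) ! 0, (i # tl xs) ! 1) \<in> R) = ind (\<exists>i < xs ! 0. (i, xs ! 1) \<in> R)"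
      by simp
  qed simp
  have b1: "cmp X J 1 (\<lambda>xs. ind (\<exists>i < xs ! 0. (i, xs ! 0) \<in> R))"
    using lift2[OF b, of 1 "\<lambda>xs. xs ! 0" "\<lambda>xs. xs ! 0"] comp_proj[of 0 1 X J] by simp
  have r1: "cmp X J 1 (\<lambda>xs. ind ((xs ! 0, xs ! 0) \<in> R))"
    by (rule cmp_rel[OF o]) (rule comp_proj, simp)+
  have "cmp X J 1 (\<lambda>xs. ind ((xs ! 0, xs ! 0) \<in> R \<and> \<not> (\<exists>i < xs ! 0. (i, xs ! 0) \<in> R)))"
    by (rule cmp_and[OF r1 cmp_not[OF b1]])
  then show ?thesis by (rule comp_cong) (simp add: ldr_def)
qed

context setting
begin

abbreviation "J2 \<equiv> jump_oracle X"

lemma c_geqE: "cmp X J2 n f \<Longrightarrow> cmp X J2 n g \<Longrightarrow> cmp X J2 n (\<lambda>xs. ind (geq E (f xs) (g xs)))"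
  by (rule lift2[OF cmp_geq[OF oE]])

lemma c_geqF: "cmp X J2 n f \<Longrightarrow> cmp X J2 n g \<Longrightarrow> cmp X J2 n (\<lambda>xs. ind (geq F (f xs) (g xs)))"
  by (rule lift2[OF cmp_geq[OF oF]])

lemma c_ldrE: "cmp X J n f \<Longrightarrow> cmp X J n (\<lambda>xs. ind (ldr E (f xs)))"
  by (rule lift1[OF cmp_ldr[OF oE]])

lemma c_ldrF: "cmp X J n f \<Longrightarrow> cmp X J n (\<lambda>xs. ind (ldr F (f xs)))"
  by (rule lift1[OF cmp_ldr[OF oF]])

lemma c_good: "cmp X J n f \<Longrightarrow> cmp X J n (\<lambda>xs. ind (good (f xs)))"
proof -
  assume f: "cmp X J n f"
  have "cmp X J n (\<lambda>xs. ind (ldr E (f xs) \<and> \<not> (f xs \<in> H)))"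
    by (rule cmp_and[OF c_ldrE[OF f] cmp_not[OF cmp_finset[OF finite_H f]]])
  then show ?thesis by (rule comp_cong) (simp add: good_def)
qed

lemma c_sz: "cmp X J2 1 (\<lambda>xs. sz (xs ! 0))"
proof -
  have p1: "cmp X J2 (Suc 1) (\<lambda>xs. xs ! 1)" by (rule comp_proj) simp
  have p0: "cmp X J2 (Suc 1) (\<lambda>xs. xs ! 0)" by (rule comp_proj) simp
  have c: "cmp X J2 (Suc 1) (\<lambda>xs. ind (\<not> good (xs ! 1) \<or> \<not> geq E (xs ! 1) (Suc (xs ! 0))))"
    by (rule cmp_or[OF cmp_not[OF c_good[OF p1]] cmp_not[OF c_geqE[OF p1 cmp_Suc[OF p0]]]])
  have "cmp X J2 1 (\<lambda>xs. LEAST k. \<not> good ((k # xs) ! 1) \<or> \<not> geq E ((k # xs) ! 1) (Suc ((k # xs) ! 0)))"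
  proof (rule mu_lift_tot[OF c])
    fix xs :: "nat list" assume "length xs = 1"
    show "\<exists>k. \<not> good ((k # xs) ! 1) \<or> \<not> geq E ((k # xs) ! 1) (Suc ((k # xs) ! 0))"
    proof (cases "good (xs ! 0)")
      case True
      then have "\<not> geq E (xs ! 0) (Suc (card (E `` {xs ! 0})))"
        using good_props(1)[OF True] unfolding geq_iff by simp
      then show ?thesis by (intro exI[of _ "card (E `` {xs ! 0})"]) simp
    qed simp
  qed
  then show ?thesis by (rule comp_cong) (simp add: sz_def)
qed

lemma c_szf: "cmp X J2 n f \<Longrightarrow> cmp X J2 n (\<lambda>xs. sz (f xs))"
  by (rule lift1[OF c_sz])

lemma c_tgt: "cmp X J2 2 (\<lambda>xs. tgt (xs ! 0) (xs ! 1))"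
proof -
  have p0: "cmp X J2 (Suc 2) (\<lambda>xs. xs ! 0)" by (rule comp_proj) simp
  have p1: "cmp X J2 (Suc 2) (\<lambda>xs. xs ! 1)" by (rule comp_proj) simp
  have p2: "cmp X J2 (Suc 2) (\<lambda>xs. xs ! 2)" by (rule comp_proj) simp
  have c: "cmp X J2 (Suc 2) (\<lambda>xs. ind (\<not> good (xs ! 1) \<or> (xs ! 2 \<le> xs ! 0 \<and> ldr F (xs ! 0) \<and> \<not> (xs ! 0 \<in> T) \<and> geq F (xs ! 0) (sz (xs ! 1)))))"
    by (rule cmp_or[OF cmp_not[OF c_good[OF p1]] cmp_and[OF cmp_le[OF p2 p0] cmp_and[OF c_ldrF[OF p0] cmp_and[OF cmp_not[OF cmp_finset[OF finite_T p0]] c_geqF[OF p0 c_szf[OF p1]]]]]])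
  have "cmp X J2 2 (\<lambda>xs. LEAST k. \<not> good ((k # xs) ! 1) \<or> ((k # xs) ! 2 \<le> (k # xs) ! 0 \<and> ldr F ((k # xs) ! 0) \<and> \<not> ((k # xs) ! 0 \<in> T) \<and> geq F ((k # xs) ! 0) (sz ((k # xs) ! 1))))"
  proof (rule mu_lift_tot[OF c])
    fix xs :: "nat list" assume "length xs = 2"
    then obtain i u where xs: "xs = [i, u]" using len2 by blast
    show "\<exists>k. \<not> good ((k # xs) ! 1) \<or> ((k # xs) ! 2 \<le> (k # xs) ! 0 \<and> ldr F ((k # xs) ! 0) \<and> \<not> ((k # xs) ! 0 \<in> T) \<and> geq F ((k # xs) ! 0) (sz ((k # xs) ! 1)))"
    proof (cases "good i")
      case True
      then show ?thesis using xs tgt_good[OF True, of u] by (intro exI[of _ "tgt i u"]) simp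
    qed (simp add: xs)
  qed
  then show ?thesis
  proof (rule comp_cong)
    fix xs :: "nat list" assume "length xs = 2"
    then obtain i u where xs: "xs = [i, u]" using len2 by blast
    show "(LEAST k. \<not> good ((k # xs) ! 1) \<or> ((k # xs) ! 2 \<le> (k # xs) ! 0 \<and> ldr F ((k # xs) ! 0) \<and> \<not> ((k # xs) ! 0 \<in> T) \<and> geq F ((k # xs) ! 0) (sz ((k # xs) ! 1)))) = tgt (xs ! 0) (xs ! 1)"
      unfolding xs tgt_def by simp
  qed
qed

lemma c_st: "cmp X J2 1 (\<lambda>xs. st (xs ! 0))"
proof -
  have p0: "cmp X J2 2 (\<lambda>xs. xs ! 0)" by (rule comp_proj) simp
  have p1: "cmp X J2 2 (\<lambda>xs. xs ! 1)" by (rule comp_proj) simp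
  have h: "cmp X J2 (Suc (Suc 0)) (\<lambda>xs. if good (xs ! 0) then Suc (tgt (xs ! 0) (xs ! 1)) else xs ! 1)"
    using cmp_if[OF c_good[OF p0] cmp_Suc[OF lift2[OF c_tgt p0 p1]] p1] by (simp add: numeral_2_eq_2)
  have "cmp X J2 (Suc 0) (\<lambda>xs. rec_nat 0 (\<lambda>i u. if good ((i # u # tl xs) ! 0) then Suc (tgt ((i # u # tl xs) ! 0) ((i # u # tl xs) ! 1)) else (i # u # tl xs) ! 1) (hd xs))"
    by (rule comp_rec[OF cmp_const h])
  then show ?thesis
  proof (rule comp_cong')
    fix xs :: "nat list" assume "length xs = 1"
    then obtain a where xs: "xs = [a]" by (auto simp: length_Suc_conv)
    show "rec_nat 0 (\<lambda>i u. if good ((i # u # tl xs) ! 0) then Suc (tgt ((i # u # tl xs) ! 0) ((i # u # tl xs) ! 1)) else (i # u # tl xs) ! 1) (hd xs) = st (xs ! 0)"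
      using xs by (simp add: st_def cong: if_cong)
  qed simp
qed

lemma c_phi: "cmp X J2 1 (\<lambda>xs. phi (xs ! 0))"
proof -
  have p0: "cmp X J2 1 (\<lambda>xs. xs ! 0)" by (rule comp_proj) simp
  have fh: "finite {x. hard x \<noteq> 0}"
    by (rule finite_subset[OF _ finite_H]) (auto simp: hard_def split: if_splits)
  have "cmp X J2 1 (\<lambda>xs. if xs ! 0 \<in> H then hard (xs ! 0) else st (Suc (xs ! 0)) - 1)"
    by (rule cmp_if[OF cmp_finset[OF finite_H p0] cmp_finfun[OF fh p0] cmp_sub[OF lift1[OF c_st cmp_Suc[OF p0]] cmp_const]])
  then show ?thesis by (rule comp_cong) (simp add: phi_def)
qed

lemma c_lead: "cmp X J 1 (\<lambda>xs. lead E (xs ! 0))"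
proof -
  have p0: "cmp X J (Suc 1) (\<lambda>xs. xs ! 0)" by (rule comp_proj) simp
  have p1: "cmp X J (Suc 1) (\<lambda>xs. xs ! 1)" by (rule comp_proj) simp
  have c: "cmp X J (Suc 1) (\<lambda>xs. ind ((xs ! 1, xs ! 0) \<in> E \<or> xs ! 0 = xs ! 1))"
    by (rule cmp_or[OF cmp_rel[OF oE p1 p0] cmp_eq[OF p0 p1]])
  have "cmp X J 1 (\<lambda>xs. LEAST k. ((k # xs) ! 1, (k # xs) ! 0) \<in> E \<or> (k # xs) ! 0 = (k # xs) ! 1)"
  proof (rule mu_lift_tot[OF c])
    fix xs :: "nat list"
    show "\<exists>k. ((k # xs) ! 1, (k # xs) ! 0) \<in> E \<or> (k # xs) ! 0 = (k # xs) ! 1"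
      by (intro exI[of _ "xs ! 0"]) simp
  qed
  then show ?thesis by (rule comp_cong) (simp add: lead_def)
qed

lemma c_fm: "compP X J2 1 (\<lambda>xs. xs ! 0 \<in> A) (\<lambda>xs. fm (xs ! 0))"
proof -
  have p0: "cmp X J2 (Suc 1) (\<lambda>xs. xs ! 0)" by (rule comp_proj) simp
  have p1: "cmp X J2 (Suc 1) (\<lambda>xs. xs ! 1)" by (rule comp_proj) simp
  have l: "cmp X J2 (Suc 1) (\<lambda>xs. lead E (xs ! 1))" by (rule lift1[OF c_lead p1])
  have t: "cmp X J2 (Suc 1) (\<lambda>xs. phi (lead E (xs ! 1)))" by (rule lift1[OF c_phi l])
  have cF: "cmp X J2 (Suc 1) (\<lambda>xs. card {i. i < xs ! 0 \<and> (phi (lead E (xs ! 1)), i) \<in> F})"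
    using lift2[OF cmp_cnt[OF oF] p0 t] by simp
  have cE: "cmp X J2 (Suc 1) (\<lambda>xs. card {i. i < xs ! 1 \<and> (lead E (xs ! 1), i) \<in> E})"
    using lift2[OF cmp_cnt[OF oE] p1 l] by simp
  have c: "cmp X J2 (Suc 1) (\<lambda>xs. ind ((phi (lead E (xs ! 1)), xs ! 0) \<in> F \<and>
      card {i. i < xs ! 0 \<and> (phi (lead E (xs ! 1)), i) \<in> F} = card {i. i < xs ! 1 \<and> (lead E (xs ! 1), i) \<in> E}))"
    by (rule cmp_and[OF cmp_rel[OF oF t p0] cmp_eq[OF cF cE]])
  have "compP X J2 1 (\<lambda>xs. xs ! 0 \<in> A) (\<lambda>xs. LEAST k. (phi (lead E ((k # xs) ! 1)), (k # xs) ! 0) \<in> F \<and>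
      card {i. i < (k # xs) ! 0 \<and> (phi (lead E ((k # xs) ! 1)), i) \<in> F} = card {i. i < (k # xs) ! 1 \<and> (lead E ((k # xs) ! 1), i) \<in> E})"
  proof (rule mu_lift[OF c])
    fix xs :: "nat list" assume "length xs = 1" "xs ! 0 \<in> A"
    then show "\<exists>k. (phi (lead E ((k # xs) ! 1)), (k # xs) ! 0) \<in> F \<and>
      card {i. i < (k # xs) ! 0 \<and> (phi (lead E ((k # xs) ! 1)), i) \<in> F} = card {i. i < (k # xs) ! 1 \<and> (lead E ((k # xs) ! 1), i) \<in> E}"
      using fm_props[of "xs ! 0"] by (intro exI[of _ "fm (xs ! 0)"]) simp
  qed
  then show ?thesis by (rule compP_cong) (simp add: fm_def)
qed

lemma main: "\<exists>f. is_embedding A E B F f \<and> delta2_on X A f"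
proof (intro exI conjI)
  show "is_embedding A E B F fm" by (rule fm_embedding)
  obtain p where p: "\<forall>xs. length xs = 1 \<longrightarrow> xs ! 0 \<in> A \<longrightarrow> ev X J2 p xs (fm (xs ! 0))"
    using c_fm unfolding compP_def by blast
  show "delta2_on X A fm" unfolding delta2_on_def
  proof (intro exI ballI)
    fix x assume "x \<in> A"
    then show "ev X J2 p [x] (fm x)" using p[rule_format, of "[x]"] by simp
  qed
qed

end



lemma eqv_trans: "equiv S R \<Longrightarrow> (a, b) \<in> R \<Longrightarrow> (b, c) \<in> R \<Longrightarrow> (a, c) \<in> R"
  by (meson equiv_def transD)
lemma eqv_class: "equiv S R \<Longrightarrow> (x, y) \<in> R \<Longrightarrow> R `` {x} = R `` {y}"
  using equiv_class_eq_iff by metis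

lemma oracle_E: "join (diag A E) (diag B F) (4 * prod_encode (z, t) + 2 + 0) = ind ((z, t) \<in> E)"
proof -
  have a: "(4 * prod_encode (z, t) + 2 + 0) div 2 = 2 * prod_encode (z, t) + 1" by simp
  have b: "(2 * prod_encode (z, t) + 1) div 2 = prod_encode (z, t)" by simp
  show ?thesis unfolding join_def diag_def a b by simp
qed

lemma oracle_F: "join (diag A E) (diag B F) (4 * prod_encode (z, t) + 2 + 1) = ind ((z, t) \<in> F)"
proof -
  have a: "(4 * prod_encode (z, t) + 2 + 1) div 2 = 2 * prod_encode (z, t) + 1" by simp
  have o: "odd (4 * prod_encode (z, t) + 2 + 1)" by simp
  have b: "(2 * prod_encode (z, t) + 1) div 2 = prod_encode (z, t)" by simp
  show ?thesis unfolding join_def diag_def a b using o by simp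
qed

lemma fin_inf_transfer:
  assumes eqA: "equiv A E" and eqB: "equiv B F" and g: "is_embedding B F A E g"
    and finA: "finite {C \<in> A // E. infinite C}"
  shows "finite {C \<in> B // F. infinite C}"
proof -
  have ginj: "inj_on g B" and gA: "\<And>x. x \<in> B \<Longrightarrow> g x \<in> A"
    and grel: "\<And>x y. x \<in> B \<Longrightarrow> y \<in> B \<Longrightarrow> (x, y) \<in> F \<longleftrightarrow> (g x, g y) \<in> E"
    using g unfolding is_embedding_def by auto
  let ?Phi = "\<lambda>C. E `` (g ` C)"
  have key: "?Phi (F `` {b}) = E `` {g b}" "g ` (F `` {b}) \<subseteq> E `` {g b}" if b: "b \<in> B" for b
  proof -
    show sub: "g ` (F `` {b}) \<subseteq> E `` {g b}"
    proof
      fix z assume "z \<in> g ` (F `` {b})"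
      then obtain c where c: "(b, c) \<in> F" "z = g c" by auto
      have "c \<in> B" using eq_dom[OF eqB c(1)] by simp
      then show "z \<in> E `` {g b}" using grel[OF b \<open>c \<in> B\<close>] c by simp
    qed
    show "?Phi (F `` {b}) = E `` {g b}"
    proof
      show "E `` (g ` (F `` {b})) \<subseteq> E `` {g b}"
      proof
        fix x assume "x \<in> E `` (g ` (F `` {b}))"
        then obtain z where z: "z \<in> g ` (F `` {b})" "(z, x) \<in> E" by blast
        have "(g b, z) \<in> E" using sub z(1) by blast
        then have "(g b, x) \<in> E" using z(2) by (rule eqv_trans[OF eqA])
        then show "x \<in> E `` {g b}" by simp
      qed
      have "(b, b) \<in> F" using b eqB by (meson equiv_def refl_onD)
      then have "g b \<in> g ` (F `` {b})" by simp
      then show "E `` {g b} \<subseteq> E `` (g ` (F `` {b}))" by blast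
    qed
  qed
  have inj: "inj_on ?Phi {C \<in> B // F. infinite C}"
  proof (rule inj_onI)
    fix C C' assume "C \<in> {C \<in> B // F. infinite C}" "C' \<in> {C \<in> B // F. infinite C}" and eq: "?Phi C = ?Phi C'"
    then obtain b b' where b: "b \<in> B" "C = F `` {b}" and b': "b' \<in> B" "C' = F `` {b'}"
      by (auto elim!: quotientE)
    have "E `` {g b} = E `` {g b'}" using eq key(1)[OF b(1)] key(1)[OF b'(1)] b(2) b'(2) by simp
    then have "(g b, g b') \<in> E" using eqA gA[OF b(1)] gA[OF b'(1)] by (simp add: equiv_class_eq_iff)
    then have "(b, b') \<in> F" using grel[OF b(1) b'(1)] by simp
    then show "C = C'" using b(2) b'(2) eqv_class[OF eqB] by simp
  qed
  have sub: "?Phi ` {C \<in> B // F. infinite C} \<subseteq> {C \<in> A // E. infinite C}"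
  proof
    fix D assume "D \<in> ?Phi ` {C \<in> B // F. infinite C}"
    then obtain C where C: "C \<in> B // F" "infinite C" "D = ?Phi C" by auto
    then obtain b where b: "b \<in> B" "C = F `` {b}" by (auto elim!: quotientE)
    have D: "D = E `` {g b}" using key(1)[OF b(1)] C(3) b(2) by simp
    have "D \<in> A // E" unfolding D by (rule quotientI[OF gA[OF b(1)]])
    moreover have "infinite D"
    proof
      assume "finite D"
      then have "finite (g ` C)" using key(2)[OF b(1)] b(2) D finite_subset by metis
      moreover have "inj_on g C" using ginj b(2) eq_dom[OF eqB] by (meson inj_on_subset subsetI Image_singleton_iff)
      ultimately show False using C(2) finite_imageD by blast
    qed
    ultimately show "D \<in> {C \<in> A // E. infinite C}" by simp
  qed
  show ?thesis by (rule finite_imageD[OF finite_subset[OF sub finA] inj])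
qed

theorem theorem3p1:
  fixes A :: "nat set" and E :: "(nat \<times> nat) set"
  assumes "eq_structure A E"
    and "finite {C \<in> A // E. infinite C}"
  shows "rel_delta2_bi_emb_categorical A E"
  unfolding rel_delta2_bi_emb_categorical_def
proof (intro allI impI)
  fix B F assume eB: "eq_structure B F" and bi: "bi_embeddable A E B F"
  have eqA: "equiv A E" using assms(1) by (simp add: eq_structure_def)
  have eqB: "equiv B F" using eB by (simp add: eq_structure_def)
  obtain e where e: "is_embedding A E B F e" using bi unfolding bi_embeddable_def embeds_def by blast
  obtain e' where e': "is_embedding B F A E e'" using bi unfolding bi_embeddable_def embeds_def by blast
  let ?X = "join (diag A E) (diag B F)"
  have finB: "finite {C \<in> B // F. infinite C}" by (rule fin_inf_transfer[OF eqA eqB e' assms(2)])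
  have oE: "\<forall>z t. ?X (4 * prod_encode (z, t) + 2 + 0) = ind ((z, t) \<in> E)" using oracle_E by blast
  have oF: "\<forall>z t. ?X (4 * prod_encode (z, t) + 2 + 1) = ind ((z, t) \<in> F)" using oracle_F by blast
  interpret s1: setting ?X A E B F 0 1 e
    by (rule setting.intro[OF eqA eqB oE oF assms(2) e])
  interpret s2: setting ?X B F A E 1 0 e'
    by (rule setting.intro[OF eqB eqA oF oE finB e'])
  obtain f where f: "is_embedding A E B F f" "delta2_on ?X A f" using s1.main by blast
  obtain g where g: "is_embedding B F A E g" "delta2_on ?X B g" using s2.main by blast
  show "\<exists>f g. is_embedding A E B F f \<and> is_embedding B F A E g \<and> delta2_on ?X A f \<and> delta2_on ?X B g"
    using f g by blast
qed

end
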